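(* Consider the linearized ADM iteration described in the context and suppose that $\mu\geq\sqrt2\max\{\rho_1,\rho_2\}$. Then there exist positive values $\eta^0_U,\eta^0_Q,\eta^0_W,R$, depending only on the initialization, such that whenever $\eta_U>\eta^0_U$, $\eta_Q>\eta^0_Q$, $\eta_W>\eta^0_W$, the sequence $\{\Theta_k=(\Omega_k,U_k,Q_k,W_k,\varepsilon^{(1)}_k,\varepsilon^{(2)}_k,Z^{(1)}_k,Z^{(2)}_k)\}$ satisfies: (1) for $k=0,1,2,\dots$, $\|\Theta_k\|:=\max\{\|\Omega_k\|,\|U_k\|,\|Q_k\|,\|W_k\|,\|\varepsilon^{(1)}_k\|,\|\varepsilon^{(2)}_k\|,\|Z^{(1)}_k\|,\|Z^{(2)}_k\|\}<R$, so the iterates lie in a compact set; (2) every convergent subsequence of $\{\Theta_k\}$ converges to a point of $S$; (3) $\mathrm{dist}(\Theta_k,S)\to0$ as $k\to\infty$, where $\mathrm{dist}(\Theta,S)=\min_{\Theta'\in S}\|\Theta'-\Theta\|$. Here $$S=\Big\{\Theta=(\Omega,U,Q,W,\varepsilon^{(1)},\varepsilon^{(2)},Z^{(1)},Z^{(2)}) \;\Big|\; \|\Theta\|<R,\ -\nabla L_s(\Theta)\in\lambda_1\partial\|U\|_1,\ H=QU+\varepsilon^{(1)},\ Y=WQU+\varepsilon^{(2)}\Big\},$$ with $\|U\|_1$ regarded as a convex function of $\Theta$ constant in all components other than $U$ (so the inclusion means $-\nabla_U L_s(\Theta)\in\lambda_1\partial\|U\|_1$ and all other partial gradients of $L_s$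 vanish).
   Context: Data: $X\in\mathbb{R}^{m\times n}$, $H\in\mathbb{R}^{s\times n}$, $Y\in\mathbb{R}^{c\times n}$; parameters $\lambda_1,\lambda_2,\rho_1,\rho_2,\delta_1,\delta_2,\mu>0$ and step parameters $\eta_U,\eta_Q,\eta_W>0$. Variables: $\Omega\in\mathbb{R}^{r\times m}$, $U\in\mathbb{R}^{r\times n}$, $Q\in\mathbb{R}^{s\times r}$, $W\in\mathbb{R}^{c\times s}$, $\varepsilon^{(1)},Z^{(1)}\in\mathbb{R}^{s\times n}$, $\varepsilon^{(2)},Z^{(2)}\in\mathbb{R}^{c\times n}$. Matrix norms are Frobenius norms, $\langle A,B\rangle=\mathrm{tr}(A^TB)$, $\|U\|_1=\sum_{ij}|U_{ij}|$. The Lagrangian is $L(\Omega,U,Q,W,\varepsilon^{(1)},\varepsilon^{(2)},Z^{(1)},Z^{(2)})=\frac12\|U-\Omega X\|_F^2+\lambda_1\|U\|_1+\frac{\rho_1}{2}\|\varepsilon^{(1)}\|^2+\frac{\rho_2}{2}\|\varepsilon^{(2)}\|^2+\langle Z^{(1)},H-QU-\varepsilon^{(1)}\rangle+\langle Z^{(2)},Y-WQU-\varepsilon^{(2)}\rangle+\frac{\mu}{2}\|H-QU-\varepsilon^{(1)}\|^2+\frac{\mu}{2}\|Y-WQU-\varepsilon^{(2)}\|^2+\frac{\delta_1}{2}\|Q\|^2+\frac{\delta_2}{2}\|W\|^2+\frac{\lambda_2}{2}\|\Omega\|^2$, and $L_s=L-\lambda_1\|U\|_1$ is its smooth part. Let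 $\tau_t$ be entrywise soft thresholding, $\tau_t(x)=\mathrm{sign}(x)\max(|x|-t,0)$. Starting from an initialization $\Theta_0$, for $k=0,1,2,\dots$: $U_{k+1}=\tau_{\lambda_1/(\mu\eta_U)}\big(U_k-\frac{1}{\mu\eta_U}\nabla_U L_s(\Omega_k,U_k,Q_k,W_k,\varepsilon^{(1)}_k,\varepsilon^{(2)}_k,Z^{(1)}_k,Z^{(2)}_k)\big)$; $Q_{k+1}=Q_k-\frac{1}{\mu\eta_Q}\nabla_Q L(\Omega_k,U_{k+1},Q_k,W_k,\varepsilon^{(1)}_k,\varepsilon^{(2)}_k,Z^{(1)}_k,Z^{(2)}_k)$; $W_{k+1}=W_k-\frac{1}{\mu\eta_W}\nabla_W L(\Omega_k,U_{k+1},Q_{k+1},W_k,\varepsilon^{(1)}_k,\varepsilon^{(2)}_k,Z^{(1)}_k,Z^{(2)}_k)$; $\Omega_{k+1}=\arg\min_\Omega L(\Omega,U_{k+1},Q_{k+1},W_{k+1},\varepsilon^{(1)}_k,\varepsilon^{(2)}_k,Z^{(1)}_k,Z^{(2)}_k)$; $\varepsilon^{(1)}_{k+1}=\arg\min_{\varepsilon^{(1)}} L(\Omega_{k+1},U_{k+1},Q_{k+1},W_{k+1},\varepsilon^{(1)},\varepsilon^{(2)}_k,Z^{(1)}_k,Z^{(2)}_k)$; $\varepsilon^{(2)}_{k+1}=\arg\min_{\varepsilon^{(2)}} L(\Omega_{k+1},U_{k+1},Q_{k+1},W_{k+1},\varepsilon^{(1)}_{k+1},\varepsilon^{(2)},Z^{(1)}_k,Z^{(2)}_k)$;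 $Z^{(1)}_{k+1}=Z^{(1)}_k+\mu(H-Q_{k+1}U_{k+1}-\varepsilon^{(1)}_{k+1})$; $Z^{(2)}_{k+1}=Z^{(2)}_k+\mu(Y-W_{k+1}Q_{k+1}U_{k+1}-\varepsilon^{(2)}_{k+1})$. *)

theory Defs
  imports "HOL-Analysis.Analysis"
begin

text \<open>Matrices are rendered as real^'cols^'rows (A $ i $ j is entry (i,j));
  the library norm on this type is the Frobenius norm, inner is tr(A^T B),
  and ** is the matrix product.\<close>

definition grad :: "('a::real_inner \<Rightarrow> real) \<Rightarrow> 'a \<Rightarrow> 'a" where
  "grad f x = (THE D. GDERIV f x :> D)"

definition subdiff :: "('a::real_inner \<Rightarrow> real) \<Rightarrow> 'a \<Rightarrow> 'a set" where
  "subdiff f x = {g. \<forall>y. f x + inner g (y - x) \<le> f y}"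

definition l1norm :: "real^'n^'m \<Rightarrow> real" where
  "l1norm A = (\<Sum>i\<in>UNIV. \<Sum>j\<in>UNIV. \<bar>A $ i $ j\<bar>)"

definition soft :: "real \<Rightarrow> real^'n^'m \<Rightarrow> real^'n^'m" where
  "soft t A = (\<chi> i j. sgn (A $ i $ j) * max (\<bar>A $ i $ j\<bar> - t) 0)"

text \<open>Smooth part L_s of the Lagrangian. Arguments:
  X H Y (data), l2 = lambda_2, r1 r2 = rho, d1 d2 = delta, mu; then
  Omega U Q W e1 e2 Z1 Z2.\<close>
definition Ls :: "real^'n^'m \<Rightarrow> real^'n^'s \<Rightarrow> real^'n^'c \<Rightarrow> real \<Rightarrow> real \<Rightarrow> real \<Rightarrow>
    real \<Rightarrow> real \<Rightarrow> real \<Rightarrow>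
    real^'m^'r \<Rightarrow> real^'n^'r \<Rightarrow> real^'r^'s \<Rightarrow> real^'s^'c \<Rightarrow>
    real^'n^'s \<Rightarrow> real^'n^'c \<Rightarrow> real^'n^'s \<Rightarrow> real^'n^'c \<Rightarrow> real" where
  "Ls X H Y l2 r1 r2 d1 d2 mu Om U Q W e1 e2 Z1 Z2 =
     (1/2) * (norm (U - Om ** X))\<^sup>2
     + (r1/2) * (norm e1)\<^sup>2 + (r2/2) * (norm e2)\<^sup>2
     + inner Z1 (H - Q ** U - e1) + inner Z2 (Y - W ** Q ** U - e2)
     + (mu/2) * (norm (H - Q ** U - e1))\<^sup>2
     + (mu/2) * (norm (Y - W ** Q ** U - e2))\<^sup>2
     + (d1/2) * (norm Q)\<^sup>2 + (d2/2) * (norm W)\<^sup>2 + (l2/2) * (norm Om)\<^sup>2"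

definition Lag :: "real^'n^'m \<Rightarrow> real^'n^'s \<Rightarrow> real^'n^'c \<Rightarrow> real \<Rightarrow> real \<Rightarrow> real \<Rightarrow> real \<Rightarrow>
    real \<Rightarrow> real \<Rightarrow> real \<Rightarrow>
    real^'m^'r \<Rightarrow> real^'n^'r \<Rightarrow> real^'r^'s \<Rightarrow> real^'s^'c \<Rightarrow>
    real^'n^'s \<Rightarrow> real^'n^'c \<Rightarrow> real^'n^'s \<Rightarrow> real^'n^'c \<Rightarrow> real" where
  "Lag X H Y l1 l2 r1 r2 d1 d2 mu Om U Q W e1 e2 Z1 Z2 =
     Ls X H Y l2 r1 r2 d1 d2 mu Om U Q W e1 e2 Z1 Z2 + l1 * l1norm U"

type_synonym ('m,'n,'r,'s,'c) theta =
  "(real^'m^'r) \<times> (real^'n^'r) \<times> (real^'r^'s) \<times> (real^'s^'c) \<times>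
   (real^'n^'s) \<times> (real^'n^'c) \<times> (real^'n^'s) \<times> (real^'n^'c)"

definition Ls_th :: "real^'n^'m \<Rightarrow> real^'n^'s \<Rightarrow> real^'n^'c \<Rightarrow> real \<Rightarrow> real \<Rightarrow> real \<Rightarrow>
    real \<Rightarrow> real \<Rightarrow> real \<Rightarrow> ('m::finite,'n::finite,'r::finite,'s::finite,'c::finite) theta \<Rightarrow> real" where
  "Ls_th X H Y l2 r1 r2 d1 d2 mu Th =
     (case Th of (Om, U, Q, W, e1, e2, Z1, Z2) \<Rightarrow>
        Ls X H Y l2 r1 r2 d1 d2 mu Om U Q W e1 e2 Z1 Z2)"

definition thnorm :: "('m::finite,'n::finite,'r::finite,'s::finite,'c::finite) theta \<Rightarrow> real" where
  "thnorm Th = (case Th of (Om, U, Q, W, e1, e2, Z1, Z2) \<Rightarrow>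
     max (norm Om) (max (norm U) (max (norm Q) (max (norm W)
       (max (norm e1) (max (norm e2) (max (norm Z1) (norm Z2))))))))"

definition thdist :: "('m::finite,'n::finite,'r::finite,'s::finite,'c::finite) theta \<Rightarrow> ('m::finite,'n::finite,'r::finite,'s::finite,'c::finite) theta set \<Rightarrow> real" where
  "thdist Th S = (INF Th'\<in>S. thnorm (Th' - Th))"

definition Sset :: "real^'n^'m \<Rightarrow> real^'n^'s \<Rightarrow> real^'n^'c \<Rightarrow> real \<Rightarrow> real \<Rightarrow> real \<Rightarrow> real \<Rightarrow>
    real \<Rightarrow> real \<Rightarrow> real \<Rightarrow> real \<Rightarrow> ('m::finite,'n::finite,'r::finite,'s::finite,'c::finite) theta set" where
  "Sset X H Y l1 l2 r1 r2 d1 d2 mu R =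
     {Th. thnorm Th < R
        \<and> - grad (Ls_th X H Y l2 r1 r2 d1 d2 mu) Th
            \<in> (\<lambda>g. l1 *\<^sub>R g) ` subdiff (\<lambda>T. l1norm (fst (snd T))) Th
        \<and> (case Th of (Om, U, Q, W, e1, e2, Z1, Z2) \<Rightarrow>
             H = Q ** U + e1 \<and> Y = W ** Q ** U + e2)}"

end

theory Submission
  imports Defs
begin

lemma mm_radd: "((A::real^'n^'m) + B) ** (C::real^'p^'n) = A ** C + B ** C"
  by (simp add: matrix_matrix_mult_def vec_eq_iff sum.distrib algebra_simps)
lemma mm_rdiff: "((A::real^'n^'m) - B) ** (C::real^'p^'n) = A ** C - B ** C"
  by (simp add: matrix_matrix_mult_def vec_eq_iff sum_subtractf algebra_simps)
lemma mm_ldiff: "(A::real^'n^'m) ** ((B::real^'p^'n) - C) = A ** B - A ** C"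
  by (simp add: matrix_matrix_mult_def vec_eq_iff sum_subtractf algebra_simps)
lemma mm_ladd: "(A::real^'n^'m) ** ((B::real^'p^'n) + C) = A ** B + A ** C"
  by (rule matrix_add_ldistrib)
lemma mm_rscale: "(A::real^'n^'m) ** (c *\<^sub>R (B::real^'p^'n)) = c *\<^sub>R (A ** B)"
  by (simp add: matrix_matrix_mult_def vec_eq_iff sum_distrib_left algebra_simps)
lemma mm_lscale: "(c *\<^sub>R (A::real^'n^'m)) ** (B::real^'p^'n) = c *\<^sub>R (A ** B)"
  by (simp add: matrix_matrix_mult_def vec_eq_iff sum_distrib_left algebra_simps)
lemma mm_rminus: "(A::real^'n^'m) ** (- (B::real^'p^'n)) = - (A ** B)"
  by (simp add: matrix_matrix_mult_def vec_eq_iff sum_negf)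
lemma mm_lminus: "(- (A::real^'n^'m)) ** (B::real^'p^'n) = - (A ** B)"
  by (simp add: matrix_matrix_mult_def vec_eq_iff sum_negf)

lemmas mm_simps = mm_radd mm_rdiff mm_ldiff mm_ladd mm_rscale mm_lscale mm_rminus mm_lminus

lemma inner_mat: "inner (A::real^'n^'m) B = (\<Sum>i\<in>UNIV. \<Sum>j\<in>UNIV. A$i$j * B$i$j)"
  by (simp add: inner_vec_def)

lemma adjL: "inner ((A::real^'n^'m) ** (B::real^'p^'n)) C = inner B (transpose A ** C)"
proof -
  have "inner (A ** B) C = (\<Sum>i\<in>UNIV. \<Sum>p\<in>UNIV. \<Sum>j\<in>UNIV. A$i$j * B$j$p * C$i$p)"
    by (simp add: inner_mat matrix_matrix_mult_def sum_distrib_right)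
  also have "\<dots> = (\<Sum>p\<in>UNIV. \<Sum>i\<in>UNIV. \<Sum>j\<in>UNIV. A$i$j * B$j$p * C$i$p)"
    by (rule sum.swap)
  also have "\<dots> = (\<Sum>p\<in>UNIV. \<Sum>j\<in>UNIV. \<Sum>i\<in>UNIV. A$i$j * B$j$p * C$i$p)"
    by (rule sum.cong[OF refl], rule sum.swap)
  also have "\<dots> = (\<Sum>j\<in>UNIV. \<Sum>p\<in>UNIV. \<Sum>i\<in>UNIV. A$i$j * B$j$p * C$i$p)"
    by (rule sum.swap)
  also have "\<dots> = inner B (transpose A ** C)"
    by (simp add: inner_mat matrix_matrix_mult_def transpose_def sum_distrib_left algebra_simps)
  finally show ?thesis .
qed

lemma adjR: "inner ((A::real^'n^'m) ** (B::real^'p^'n)) C = inner A (C ** transpose B)"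
  apply (simp add: inner_mat matrix_matrix_mult_def transpose_def sum_distrib_left sum_distrib_right)
  apply (rule sum.cong, simp)
  apply (subst sum.swap)
  apply (simp add: algebra_simps)
  done

lemma norm2_mat: "(norm (A::real^'n^'m))^2 = (\<Sum>i\<in>UNIV. \<Sum>j\<in>UNIV. (A$i$j)^2)"
  unfolding power2_norm_eq_inner inner_mat by (simp add: power2_eq_square)

lemma norm_mm_sq: "(norm ((A::real^'n^'m) ** (B::real^'p^'n)))^2 \<le> (norm A)^2 * (norm B)^2"
proof -
  have "(norm (A ** B))^2 = (\<Sum>i\<in>UNIV. \<Sum>j\<in>UNIV. (inner (A$i) (column j B))^2)"
    by (simp add: norm2_mat matrix_matrix_mult_def inner_vec_def column_def)
  also have "\<dots> \<le> (\<Sum>i\<in>UNIV. \<Sum>j\<in>UNIV. inner (A$i) (A$i) * inner (column j B) (column j B))"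
    by (intro sum_mono Cauchy_Schwarz_ineq)
  also have "\<dots> = (\<Sum>i\<in>UNIV. inner (A$i) (A$i)) * (\<Sum>j\<in>UNIV. inner (column j B) (column j B))"
    by (simp add: sum_product)
  also have "(\<Sum>i\<in>UNIV. inner (A$i) (A$i)) = (norm A)^2"
    by (simp add: power2_norm_eq_inner inner_vec_def)
  also have "(\<Sum>j\<in>UNIV. inner (column j B) (column j B)) = (\<Sum>j\<in>UNIV. \<Sum>k\<in>UNIV. (B$k$j)^2)"
    by (simp add: inner_vec_def column_def power2_eq_square)
  also have "\<dots> = (\<Sum>k\<in>UNIV. \<Sum>j\<in>UNIV. (B$k$j)^2)" by (rule sum.swap)
  also have "\<dots> = (norm B)^2" by (simp add: norm2_mat)
  finally show ?thesis .
qed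

lemma norm_mm: "norm ((A::real^'n^'m) ** (B::real^'p^'n)) \<le> norm A * norm B"
  using norm_mm_sq[of A B]
  by (metis norm_ge_zero power_mult_distrib power2_le_imp_le zero_le_mult_iff)

lemma bb_mm: "bounded_bilinear ((**) :: real^'n^'m \<Rightarrow> real^'p^'n \<Rightarrow> real^'p^'m)"
  apply unfold_locales
  apply (simp_all add: mm_simps)
  apply (rule exI[of _ 1])
  apply (intro allI)
  apply (simp add: norm_mm)
  done

lemmas has_derivative_mm [derivative_intros] = bounded_bilinear.FDERIV [OF bb_mm]
lemmas tendsto_mm [tendsto_intros] = bounded_bilinear.tendsto [OF bb_mm]
lemmas continuous_mm [continuous_intros] = bounded_bilinear.continuous [OF bb_mm]

lemma ns_add: "(norm ((a::'a::real_inner) + b))^2 = (norm a)^2 + 2 * inner a b + (norm b)^2"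
  by (simp add: power2_norm_eq_inner inner_add_left inner_add_right inner_commute)
lemma ns_diff: "(norm ((a::'a::real_inner) - b))^2 = (norm a)^2 - 2 * inner a b + (norm b)^2"
  by (simp add: power2_norm_eq_inner inner_diff_left inner_diff_right inner_commute)

lemma adjT: "inner (transpose (A::real^'n^'m) ** C) (B::real^'p^'n) = inner C (A ** B)"
  by (metis adjL inner_commute)

definition GU where
  "GU (X::real^'n^'m) H Y mu Om U Q W e1 e2 Z1 Z2 =
     (U - Om ** X) - transpose Q ** (Z1 + mu *\<^sub>R (H - Q ** U - e1))
       - transpose (W ** Q) ** (Z2 + mu *\<^sub>R (Y - W ** Q ** U - e2))"

lemma GU_inner: "inner (GU X H Y mu Om U Q W e1 e2 Z1 Z2) h = inner (U - Om ** X) h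
      - inner (Z1 + mu *\<^sub>R (H - Q ** U - e1)) (Q ** h) - inner (Z2 + mu *\<^sub>R (Y - W ** Q ** U - e2)) (W ** Q ** h)"
    unfolding GU_def inner_diff_left adjT by simp

lemma Ls_U_exp:
  "Ls X H Y l2 r1 r2 d1 d2 mu Om (U + h) Q W e1 e2 Z1 Z2 =
   Ls X H Y l2 r1 r2 d1 d2 mu Om U Q W e1 e2 Z1 Z2 + inner (GU X H Y mu Om U Q W e1 e2 Z1 Z2) h
   + (1/2) * (norm h)^2 + (mu/2) * (norm (Q ** h))^2 + (mu/2) * (norm (W ** Q ** h))^2"
proof -
  have a1: "U + h - Om ** X = (U - Om ** X) + h" by simp
  have a2: "H - Q ** (U + h) - e1 = (H - Q ** U - e1) - Q ** h" by (simp add: mm_simps)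
  have a3: "Y - W ** Q ** (U + h) - e2 = (Y - W ** Q ** U - e2) - W ** Q ** h" by (simp add: mm_simps)
  have g: "inner (GU X H Y mu Om U Q W e1 e2 Z1 Z2) h = inner (U - Om ** X) h
      - inner (Z1 + mu *\<^sub>R (H - Q ** U - e1)) (Q ** h) - inner (Z2 + mu *\<^sub>R (Y - W ** Q ** U - e2)) (W ** Q ** h)"
    unfolding GU_def inner_diff_left adjT by simp
  show ?thesis
    unfolding Ls_def a1 a2 a3 ns_add ns_diff g
    by (simp add: inner_diff_right inner_add_left inner_commute algebra_simps)
qed

lemma gderiv_quad:
  fixes f :: "'a::real_inner \<Rightarrow> real"
  assumes e: "\<And>h. f (x + h) = f x + inner G h + q h" and b: "\<And>h. \<bar>q h\<bar> \<le> C * (norm h)^2"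
  shows "GDERIV f x :> G"
  unfolding gderiv_def has_derivative_iff_norm
proof
  show "bounded_linear (\<lambda>h. inner h G)" by (rule bounded_linear_inner_left)
  have le: "norm (norm (f y - f x - inner (y - x) G) / norm (y - x)) \<le> C * norm (y - x)" for y
  proof (cases "y = x")
    case True then show ?thesis by simp
  next
    case False
    have "f y = f x + inner G (y - x) + q (y - x)" using e[of "y - x"] by simp
    then have "f y - f x - inner (y - x) G = q (y - x)" by (simp add: inner_commute)
    moreover have "norm (y - x) > 0" using False by simp
    ultimately show ?thesis using b[of "y - x"]
      by (simp add: divide_le_eq power2_eq_square mult.assoc)
  qed
  have "((\<lambda>y. C * norm (y - x)) \<longlongrightarrow> C * norm (x - x)) (at x)"
    by (intro tendsto_intros)
  then have t: "((\<lambda>y. C * norm (y - x)) \<longlongrightarrow> 0) (at x)" by simp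
  show "((\<lambda>y. norm (f y - f x - inner (y - x) G) / norm (y - x)) \<longlongrightarrow> 0) (at x)"
    by (rule Lim_null_comparison[OF always_eventually t]) (use le in auto)
qed

lemma grad_eqI: "GDERIV f x :> D \<Longrightarrow> grad f x = D"
  unfolding grad_def
proof (rule the_equality)
  fix D' assume a: "GDERIV f x :> D" and b: "GDERIV f x :> D'"
  have "(\<lambda>h. inner h D) = (\<lambda>h. inner h D')" using has_derivative_unique[OF a[unfolded gderiv_def] b[unfolded gderiv_def]] .
  then have "inner (D - D') D = inner (D - D') D'" by meson
  then have "inner (D - D') (D - D') = 0" by (simp add: inner_diff_right)
  then show "D' = D" by simp
qed

lemma adjRT: "inner ((C::real^'n^'m) ** transpose (B::real^'n^'p)) (A::real^'p^'m) = inner C (A ** B)"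
  by (metis adjR inner_commute)

definition GQ where
  "GQ (X::real^'n^'m) H Y d1 mu Om (U::real^'n^'r) Q W e1 e2 Z1 Z2 =
     - ((Z1 + mu *\<^sub>R (H - Q ** U - e1)) ** transpose U)
     - transpose W ** (Z2 + mu *\<^sub>R (Y - W ** Q ** U - e2)) ** transpose U + d1 *\<^sub>R Q"

lemma GQ_inner: "inner (GQ X H Y d1 mu Om U Q W e1 e2 Z1 Z2) h =
   - inner (Z1 + mu *\<^sub>R (H - Q ** U - e1)) (h ** U)
   - inner (Z2 + mu *\<^sub>R (Y - W ** Q ** U - e2)) (W ** h ** U) + d1 * inner Q h"
  unfolding GQ_def inner_diff_left inner_add_left inner_minus_left adjRT adjT
  by (simp add: matrix_mul_assoc)

lemma Ls_Q_exp:
  "Ls X H Y l2 r1 r2 d1 d2 mu Om U (Q + h) W e1 e2 Z1 Z2 =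
   Ls X H Y l2 r1 r2 d1 d2 mu Om U Q W e1 e2 Z1 Z2 + inner (GQ X H Y d1 mu Om U Q W e1 e2 Z1 Z2) h
   + (d1/2) * (norm h)^2 + (mu/2) * (norm (h ** U))^2 + (mu/2) * (norm (W ** h ** U))^2"
proof -
  have a2: "H - (Q + h) ** U - e1 = (H - Q ** U - e1) - h ** U" by (simp add: mm_simps)
  have a3: "Y - W ** (Q + h) ** U - e2 = (Y - W ** Q ** U - e2) - W ** h ** U" by (simp add: mm_simps)
  show ?thesis
    unfolding Ls_def a2 a3 ns_add ns_diff GQ_inner
    by (simp add: inner_diff_right inner_add_left inner_commute algebra_simps)
qed

definition GW where
  "GW (X::real^'n^'m) H Y d2 mu Om (U::real^'n^'r) Q W e1 e2 Z1 Z2 =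
     - ((Z2 + mu *\<^sub>R (Y - W ** Q ** U - e2)) ** transpose (Q ** U)) + d2 *\<^sub>R W"

lemma GW_inner: "inner (GW X H Y d2 mu Om U Q W e1 e2 Z1 Z2) h =
   - inner (Z2 + mu *\<^sub>R (Y - W ** Q ** U - e2)) (h ** Q ** U) + d2 * inner W h"
  unfolding GW_def inner_add_left inner_minus_left adjRT
  by (simp add: matrix_mul_assoc)

lemma Ls_W_exp:
  "Ls X H Y l2 r1 r2 d1 d2 mu Om U Q (W + h) e1 e2 Z1 Z2 =
   Ls X H Y l2 r1 r2 d1 d2 mu Om U Q W e1 e2 Z1 Z2 + inner (GW X H Y d2 mu Om U Q W e1 e2 Z1 Z2) h
   + (d2/2) * (norm h)^2 + (mu/2) * (norm (h ** Q ** U))^2"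
proof -
  have a3: "Y - (W + h) ** Q ** U - e2 = (Y - W ** Q ** U - e2) - h ** Q ** U" by (simp add: mm_simps)
  show ?thesis
    unfolding Ls_def a3 ns_add ns_diff GW_inner
    by (simp add: inner_diff_right inner_add_left inner_commute algebra_simps)
qed

definition GOm where
  "GOm (X::real^'n^'m) l2 Om U = - ((U - Om ** X) ** transpose X) + l2 *\<^sub>R Om"

lemma GOm_inner: "inner (GOm X l2 Om U) h = - inner (U - Om ** X) (h ** X) + l2 * inner Om h"
  unfolding GOm_def inner_add_left inner_minus_left adjRT by simp

lemma Ls_Om_exp:
  "Ls X H Y l2 r1 r2 d1 d2 mu (Om + h) U Q W e1 e2 Z1 Z2 =
   Ls X H Y l2 r1 r2 d1 d2 mu Om U Q W e1 e2 Z1 Z2 + inner (GOm X l2 Om U) h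
   + (1/2) * (norm (h ** X))^2 + (l2/2) * (norm h)^2"
proof -
  have a1: "U - (Om + h) ** X = (U - Om ** X) - h ** X" by (simp add: mm_simps)
  show ?thesis
    unfolding Ls_def a1 ns_add ns_diff GOm_inner
    by (simp add: inner_diff_right inner_add_left inner_commute algebra_simps)
qed

definition Ge1 where "Ge1 (H::real^'n^'s) r1 mu U Q e1 Z1 = r1 *\<^sub>R e1 - Z1 - mu *\<^sub>R (H - Q ** U - e1)"
definition Ge2 where "Ge2 (Y::real^'n^'c) r2 mu U Q W e2 Z2 = r2 *\<^sub>R e2 - Z2 - mu *\<^sub>R (Y - W ** Q ** U - e2)"

lemma Ls_e1_exp:
  "Ls X H Y l2 r1 r2 d1 d2 mu Om U Q W (e1 + h) e2 Z1 Z2 =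
   Ls X H Y l2 r1 r2 d1 d2 mu Om U Q W e1 e2 Z1 Z2 + inner (Ge1 H r1 mu U Q e1 Z1) h
   + ((r1 + mu)/2) * (norm h)^2"
proof -
  have a2: "H - Q ** U - (e1 + h) = (H - Q ** U - e1) - h" by simp
  show ?thesis
    unfolding Ls_def a2 ns_add ns_diff Ge1_def
    by (simp add: inner_diff_right inner_diff_left inner_add_left inner_commute algebra_simps)
qed

lemma Ls_e2_exp:
  "Ls X H Y l2 r1 r2 d1 d2 mu Om U Q W e1 (e2 + h) Z1 Z2 =
   Ls X H Y l2 r1 r2 d1 d2 mu Om U Q W e1 e2 Z1 Z2 + inner (Ge2 Y r2 mu U Q W e2 Z2) h
   + ((r2 + mu)/2) * (norm h)^2"
proof -
  have a2: "Y - W ** Q ** U - (e2 + h) = (Y - W ** Q ** U - e2) - h" by simp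
  show ?thesis
    unfolding Ls_def a2 ns_add ns_diff Ge2_def
    by (simp add: inner_diff_right inner_diff_left inner_add_left inner_commute algebra_simps)
qed

definition Gth where
  "Gth X H Y l2 r1 r2 d1 d2 mu Th = (case Th of (Om,U,Q,W,e1,e2,Z1,Z2) \<Rightarrow>
     (GOm X l2 Om U, GU X H Y mu Om U Q W e1 e2 Z1 Z2, GQ X H Y d1 mu Om U Q W e1 e2 Z1 Z2,
      GW X H Y d2 mu Om U Q W e1 e2 Z1 Z2, Ge1 H r1 mu U Q e1 Z1, Ge2 Y r2 mu U Q W e2 Z2,
      H - Q ** U - e1, Y - W ** Q ** U - e2))"

lemma Ls_th_alt: "Ls_th X H Y l2 r1 r2 d1 d2 mu = (\<lambda>T. Ls X H Y l2 r1 r2 d1 d2 mu (fst T) (fst (snd T))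
   (fst (snd (snd T))) (fst (snd (snd (snd T)))) (fst (snd (snd (snd (snd T)))))
   (fst (snd (snd (snd (snd (snd T)))))) (fst (snd (snd (snd (snd (snd (snd T)))))))
   (snd (snd (snd (snd (snd (snd (snd T))))))))"
  by (auto simp: Ls_th_def split: prod.split)

lemma GOm_inner': "inner h (GOm X l2 Om U) = - inner (U - Om ** X) (h ** X) + l2 * inner Om h"
  by (metis GOm_inner inner_commute)
lemma GU_inner': "inner h (GU X H Y mu Om U Q W e1 e2 Z1 Z2) = inner (U - Om ** X) h
      - inner (Z1 + mu *\<^sub>R (H - Q ** U - e1)) (Q ** h) - inner (Z2 + mu *\<^sub>R (Y - W ** Q ** U - e2)) (W ** Q ** h)"
  by (metis GU_inner inner_commute)
lemma GQ_inner': "inner h (GQ X H Y d1 mu Om U Q W e1 e2 Z1 Z2) =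
   - inner (Z1 + mu *\<^sub>R (H - Q ** U - e1)) (h ** U)
   - inner (Z2 + mu *\<^sub>R (Y - W ** Q ** U - e2)) (W ** h ** U) + d1 * inner Q h"
  by (metis GQ_inner inner_commute)
lemma GW_inner': "inner h (GW X H Y d2 mu Om U Q W e1 e2 Z1 Z2) =
   - inner (Z2 + mu *\<^sub>R (Y - W ** Q ** U - e2)) (h ** Q ** U) + d2 * inner W h"
  by (metis GW_inner inner_commute)

lemma Ls_th_gderiv: "GDERIV (Ls_th X H Y l2 r1 r2 d1 d2 mu) Th :> Gth X H Y l2 r1 r2 d1 d2 mu Th"
proof -
  obtain Om U Q W e1 e2 Z1 Z2 where Th: "Th = (Om,U,Q,W,e1,e2,Z1,Z2)" by (cases Th) auto
  show ?thesis
  unfolding gderiv_def Ls_th_alt Ls_def power2_norm_eq_inner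
  apply (rule derivative_eq_intros refl | simp)+
  apply (rule ext)
  subgoal for h
  proof -
    obtain a b c d e f z1 z2 where h: "h = (a,b,c,d,e,f,z1,z2)" by (metis prod.collapse)
    show ?thesis unfolding h
    apply (simp add: Th Gth_def GOm_inner' GU_inner' GQ_inner' GW_inner' Ge1_def Ge2_def
       inner_diff_right inner_diff_left inner_add_left inner_add_right mm_simps matrix_mul_assoc)
    apply (simp add: inner_commute field_simps)
    done
  qed
  done
qed

lemma soft_scalar:
  fixes t v u :: real
  assumes t: "t \<ge> 0"
  shows "t * \<bar>sgn v * max (\<bar>v\<bar> - t) 0\<bar> + (v - sgn v * max (\<bar>v\<bar> - t) 0) * (u - sgn v * max (\<bar>v\<bar> - t) 0) \<le> t * \<bar>u\<bar>"
proof (cases "v > t")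
  case True
  then have "sgn v * max (\<bar>v\<bar> - t) 0 = v - t" using t by (simp add: sgn_if)
  moreover have "t * u \<le> t * \<bar>u\<bar>" using t by (simp add: mult_left_mono)
  ultimately show ?thesis using True t by (simp add: algebra_simps)
next
  case False
  show ?thesis
  proof (cases "v < - t")
    case True
    then have "sgn v * max (\<bar>v\<bar> - t) 0 = v + t" using t by (simp add: sgn_if)
    moreover have "- (t * u) \<le> t * \<bar>u\<bar>" using t by (metis abs_ge_minus_self mult_left_mono mult_minus_right)
    ultimately show ?thesis using True t by (simp add: algebra_simps)
  next
    case False2: False
    then have "\<bar>v\<bar> \<le> t" using False by simp
    then have z: "sgn v * max (\<bar>v\<bar> - t) 0 = 0" by simp
    have "v * u \<le> \<bar>v\<bar> * \<bar>u\<bar>" by (metis abs_ge_self abs_mult)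
    also have "\<dots> \<le> t * \<bar>u\<bar>" using \<open>\<bar>v\<bar> \<le> t\<close> by (simp add: mult_right_mono)
    finally show ?thesis unfolding z by simp
  qed
qed

lemma soft_prox:
  fixes V U :: "real^'n^'m"
  assumes t: "t \<ge> 0"
  shows "t * l1norm (soft t V) + inner (V - soft t V) (U - soft t V) \<le> t * l1norm U"
proof -
  have "t * l1norm (soft t V) + inner (V - soft t V) (U - soft t V)
     = (\<Sum>i\<in>UNIV. \<Sum>j\<in>UNIV. t * \<bar>sgn (V$i$j) * max (\<bar>V$i$j\<bar> - t) 0\<bar> + (V$i$j - sgn (V$i$j) * max (\<bar>V$i$j\<bar> - t) 0) * (U$i$j - sgn (V$i$j) * max (\<bar>V$i$j\<bar> - t) 0))"
    by (simp add: l1norm_def inner_mat soft_def sum_distrib_left sum.distrib)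
  also have "\<dots> \<le> (\<Sum>i\<in>UNIV. \<Sum>j\<in>UNIV. t * \<bar>U$i$j\<bar>)"
    by (intro sum_mono soft_scalar t)
  also have "\<dots> = t * l1norm U" by (simp add: l1norm_def sum_distrib_left)
  finally show ?thesis .
qed

lemma prox_step:
  fixes U V g :: "real^'n^'m"
  assumes c: "c > 0" and l1: "l1 \<ge> 0" and S: "S = soft (l1 / c) (U - (1 / c) *\<^sub>R g)"
  shows "l1 * l1norm S + inner (- g - c *\<^sub>R (S - U)) (V - S) \<le> l1 * l1norm V"
proof -
  have "(l1/c) * l1norm S + inner ((U - (1 / c) *\<^sub>R g) - S) (V - S) \<le> (l1/c) * l1norm V"
    using soft_prox[of "l1/c" "U - (1 / c) *\<^sub>R g" V] S c l1 by simp
  then have "c * ((l1/c) * l1norm S + inner ((U - (1 / c) *\<^sub>R g) - S) (V - S)) \<le> c * ((l1/c) * l1norm V)"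
    using c by (simp only: mult_le_cancel_left_pos)
  moreover have "c * ((l1/c) * l1norm S + inner ((U - (1 / c) *\<^sub>R g) - S) (V - S)) = l1 * l1norm S + c * inner ((U - (1 / c) *\<^sub>R g) - S) (V - S)"
    using c by (simp add: field_simps)
  moreover have "c * ((l1/c) * l1norm V) = l1 * l1norm V" using c by simp
  moreover have "c *\<^sub>R ((U - (1 / c) *\<^sub>R g) - S) = - g - c *\<^sub>R (S - U)"
    using c by (simp add: algebra_simps)
  moreover have "c * inner ((U - (1 / c) *\<^sub>R g) - S) (V - S) = inner (c *\<^sub>R ((U - (1 / c) *\<^sub>R g) - S)) (V - S)"
    by simp
  ultimately show ?thesis by (simp add: algebra_simps)
qed

lemma sq_mono_mult: "(a::real) \<le> b \<Longrightarrow> c \<ge> 0 \<Longrightarrow> c * a \<le> c * b" by (simp add: mult_left_mono)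

lemma qU_le:
  fixes h :: "real^'n^'r" and Q :: "real^'r^'s" and W :: "real^'s^'c"
  assumes mu: "mu \<ge> 0"
  shows "(1/2) * (norm h)^2 + (mu/2) * (norm (Q ** h))^2 + (mu/2) * (norm (W ** Q ** h))^2
     \<le> ((1 + mu * (norm Q)^2 + mu * (norm W)^2 * (norm Q)^2) / 2) * (norm h)^2"
proof -
  have a: "(norm (Q ** h))^2 \<le> (norm Q)^2 * (norm h)^2" by (rule norm_mm_sq)
  have "(norm (W ** Q ** h))^2 = (norm (W ** (Q ** h)))^2" by (simp add: matrix_mul_assoc)
  also have "\<dots> \<le> (norm W)^2 * (norm (Q ** h))^2" by (rule norm_mm_sq)
  also have "\<dots> \<le> (norm W)^2 * ((norm Q)^2 * (norm h)^2)" by (rule sq_mono_mult[OF a]) simp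
  finally have b: "(norm (W ** Q ** h))^2 \<le> (norm W)^2 * ((norm Q)^2 * (norm h)^2)" .
  have "(mu/2) * (norm (Q ** h))^2 \<le> (mu/2) * ((norm Q)^2 * (norm h)^2)" using a mu by (simp add: mult_left_mono)
  moreover have "(mu/2) * (norm (W ** Q ** h))^2 \<le> (mu/2) * ((norm W)^2 * ((norm Q)^2 * (norm h)^2))" using b mu by (simp add: mult_left_mono)
  ultimately show ?thesis by (simp add: algebra_simps add_divide_distrib)
qed

lemma qQ_le:
  fixes h :: "real^'r^'s" and U :: "real^'n^'r" and W :: "real^'s^'c"
  assumes mu: "mu \<ge> 0"
  shows "(d1/2) * (norm h)^2 + (mu/2) * (norm (h ** U))^2 + (mu/2) * (norm (W ** h ** U))^2
     \<le> ((d1 + mu * (norm U)^2 + mu * (norm W)^2 * (norm U)^2) / 2) * (norm h)^2"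
proof -
  have a: "(norm (h ** U))^2 \<le> (norm h)^2 * (norm U)^2" by (rule norm_mm_sq)
  have "(norm (W ** h ** U))^2 = (norm (W ** (h ** U)))^2" by (simp add: matrix_mul_assoc)
  also have "\<dots> \<le> (norm W)^2 * (norm (h ** U))^2" by (rule norm_mm_sq)
  also have "\<dots> \<le> (norm W)^2 * ((norm h)^2 * (norm U)^2)" by (rule sq_mono_mult[OF a]) simp
  finally have b: "(norm (W ** h ** U))^2 \<le> (norm W)^2 * ((norm h)^2 * (norm U)^2)" .
  have "(mu/2) * (norm (h ** U))^2 \<le> (mu/2) * ((norm h)^2 * (norm U)^2)" using a mu by (simp add: mult_left_mono)
  moreover have "(mu/2) * (norm (W ** h ** U))^2 \<le> (mu/2) * ((norm W)^2 * ((norm h)^2 * (norm U)^2))" using b mu by (simp add: mult_left_mono)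
  ultimately show ?thesis by (simp add: algebra_simps add_divide_distrib)
qed

lemma qW_le:
  fixes h :: "real^'s^'c" and U :: "real^'n^'r" and Q :: "real^'r^'s"
  assumes mu: "mu \<ge> 0"
  shows "(d2/2) * (norm h)^2 + (mu/2) * (norm (h ** Q ** U))^2
     \<le> ((d2 + mu * (norm Q)^2 * (norm U)^2) / 2) * (norm h)^2"
proof -
  have "(norm (h ** Q ** U))^2 = (norm (h ** (Q ** U)))^2" by (simp add: matrix_mul_assoc)
  also have "\<dots> \<le> (norm h)^2 * (norm (Q ** U))^2" by (rule norm_mm_sq)
  also have "\<dots> \<le> (norm h)^2 * ((norm Q)^2 * (norm U)^2)" by (rule sq_mono_mult[OF norm_mm_sq]) simp
  finally have b: "(norm (h ** Q ** U))^2 \<le> (norm h)^2 * ((norm Q)^2 * (norm U)^2)" .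
  have "(mu/2) * (norm (h ** Q ** U))^2 \<le> (mu/2) * ((norm h)^2 * ((norm Q)^2 * (norm U)^2))" using b mu by (simp add: mult_left_mono)
  then show ?thesis by (simp add: algebra_simps add_divide_distrib)
qed

lemma grad_step_descent:
  fixes f :: "'a::real_inner \<Rightarrow> real"
  assumes e: "\<And>h. f (x + h) = f x + inner g h + q h" and b: "\<And>h. q h \<le> C * (norm h)^2"
    and c: "c > 0" and x': "x' = x - (1/c) *\<^sub>R g"
  shows "f x' \<le> f x - (c - C) * (norm (x' - x))^2"
proof -
  have d: "x' - x = - (1/c) *\<^sub>R g" using x' by simp
  have "f x' = f x + inner g (x' - x) + q (x' - x)" using e[of "x' - x"] by simp
  moreover have "inner g (x' - x) = - c * (norm (x' - x))^2"
  proof -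
    have gg: "inner g g = (norm g)^2" by (simp add: power2_norm_eq_inner)
    show ?thesis unfolding d using c by (simp add: gg power2_eq_square)
  qed
  ultimately show ?thesis using b[of "x' - x"] by (simp add: algebra_simps)
qed

lemma min_quad:
  fixes f :: "'a::real_inner \<Rightarrow> real"
  assumes e: "\<And>h. f (x + h) = f x + inner G h + q h" and hom: "\<And>t h. q (t *\<^sub>R h) = t^2 * q h"
    and m: "\<And>y. f x \<le> f y"
  shows "G = 0" and "\<And>y. f y = f x + q (y - x)"
proof -
  have le: "0 \<le> - t * inner G G + t^2 * q G" for t
    using m[of "x + (- t) *\<^sub>R G"] e[of "(- t) *\<^sub>R G"] hom[of "- t" G] by simp
  have "inner G G \<le> 0"
  proof (rule ccontr)
    assume "\<not> inner G G \<le> 0"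
    then have p: "inner G G > 0" by linarith
    show False
    proof (cases "q G \<le> 0")
      case True
      then show False using le[of 1] p by simp
    next
      case False
      define t where "t = inner G G / (2 * q G)"
      have tp: "t > 0" using False p by (simp add: t_def)
      have e2: "t^2 * q G = t * (inner G G / 2)" using False by (simp add: t_def power2_eq_square)
      have "0 \<le> - t * inner G G + t * (inner G G / 2)" using le[of t] unfolding e2 .
      moreover have "t * inner G G > 0" using tp p by simp
      ultimately show False by linarith
    qed
  qed
  then show G0: "G = 0" by (metis inner_eq_zero_iff inner_ge_zero order_antisym)
  show "f y = f x + q (y - x)" for y using e[of "y - x"] G0 by simp
qed

lemma Lag_U_exp:
  "Lag X H Y l1 l2 r1 r2 d1 d2 mu Om (U + h) Q W e1 e2 Z1 Z2 =
   Ls X H Y l2 r1 r2 d1 d2 mu Om U Q W e1 e2 Z1 Z2 + inner (GU X H Y mu Om U Q W e1 e2 Z1 Z2) h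
   + ((1/2) * (norm h)^2 + (mu/2) * (norm (Q ** h))^2 + (mu/2) * (norm (W ** Q ** h))^2) + l1 * l1norm (U + h)"
  unfolding Lag_def Ls_U_exp by simp

lemma U_descent:
  fixes X :: "real^'n^'m" and U :: "real^'n^'r" and Q :: "real^'r^'s" and W :: "real^'s^'c"
  assumes c: "c > 0" and l1: "l1 \<ge> 0" and mu: "mu \<ge> 0"
    and S: "S = soft (l1 / c) (U - (1 / c) *\<^sub>R GU X H Y mu Om U Q W e1 e2 Z1 Z2)"
  shows "Lag X H Y l1 l2 r1 r2 d1 d2 mu Om S Q W e1 e2 Z1 Z2 \<le> Lag X H Y l1 l2 r1 r2 d1 d2 mu Om U Q W e1 e2 Z1 Z2
      - (c - (1 + mu * (norm Q)^2 + mu * (norm W)^2 * (norm Q)^2) / 2) * (norm (S - U))^2"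
proof -
  define g where "g = GU X H Y mu Om U Q W e1 e2 Z1 Z2"
  define d where "d = S - U"
  have Sd: "S = U + d" by (simp add: d_def)
  have p: "l1 * l1norm S + inner (- g - c *\<^sub>R (S - U)) (U - S) \<le> l1 * l1norm U"
    using prox_step[OF c l1 S[folded g_def], of U] .
  have i: "inner (- g - c *\<^sub>R (S - U)) (U - S) = inner g d + c * (norm d)^2"
  proof -
    have "U - S = - d" by (simp add: d_def)
    then show ?thesis by (simp add: d_def[symmetric] power2_norm_eq_inner inner_diff_left)
  qed
  have q: "(1/2) * (norm d)^2 + (mu/2) * (norm (Q ** d))^2 + (mu/2) * (norm (W ** Q ** d))^2
     \<le> ((1 + mu * (norm Q)^2 + mu * (norm W)^2 * (norm Q)^2) / 2) * (norm d)^2"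
    by (rule qU_le[OF mu])
  have L1: "Lag X H Y l1 l2 r1 r2 d1 d2 mu Om S Q W e1 e2 Z1 Z2 = Ls X H Y l2 r1 r2 d1 d2 mu Om U Q W e1 e2 Z1 Z2 + inner g d
   + ((1/2) * (norm d)^2 + (mu/2) * (norm (Q ** d))^2 + (mu/2) * (norm (W ** Q ** d))^2) + l1 * l1norm S"
    unfolding Sd Lag_U_exp g_def ..
  have L2: "Lag X H Y l1 l2 r1 r2 d1 d2 mu Om U Q W e1 e2 Z1 Z2 = Ls X H Y l2 r1 r2 d1 d2 mu Om U Q W e1 e2 Z1 Z2 + l1 * l1norm U"
    unfolding Lag_def ..
  have m: "(c - (1 + mu * (norm Q)^2 + mu * (norm W)^2 * (norm Q)^2) / 2) * (norm d)^2
     = c * (norm d)^2 - ((1 + mu * (norm Q)^2 + mu * (norm W)^2 * (norm Q)^2) / 2) * (norm d)^2"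
    by (simp add: algebra_simps)
  show ?thesis unfolding d_def[symmetric] m L1 L2 using p q unfolding i by linarith
qed

lemma Q_descent:
  fixes X :: "real^'n^'m" and U :: "real^'n^'r" and Q :: "real^'r^'s" and W :: "real^'s^'c"
  assumes c: "c > 0" and mu: "mu \<ge> 0"
    and Q': "Q' = Q - (1 / c) *\<^sub>R GQ X H Y d1 mu Om U Q W e1 e2 Z1 Z2"
  shows "Lag X H Y l1 l2 r1 r2 d1 d2 mu Om U Q' W e1 e2 Z1 Z2 \<le> Lag X H Y l1 l2 r1 r2 d1 d2 mu Om U Q W e1 e2 Z1 Z2
      - (c - (d1 + mu * (norm U)^2 + mu * (norm W)^2 * (norm U)^2) / 2) * (norm (Q' - Q))^2"
  apply (rule grad_step_descent[where f = "\<lambda>V. Lag X H Y l1 l2 r1 r2 d1 d2 mu Om U V W e1 e2 Z1 Z2", OF _ _ c Q'])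
   apply (simp add: Lag_def Ls_Q_exp)
  subgoal for h using qQ_le[OF mu, of d1 h U W] by (simp add: algebra_simps)
  done

lemma W_descent:
  fixes X :: "real^'n^'m" and U :: "real^'n^'r" and Q :: "real^'r^'s" and W :: "real^'s^'c"
  assumes c: "c > 0" and mu: "mu \<ge> 0"
    and W': "W' = W - (1 / c) *\<^sub>R GW X H Y d2 mu Om U Q W e1 e2 Z1 Z2"
  shows "Lag X H Y l1 l2 r1 r2 d1 d2 mu Om U Q W' e1 e2 Z1 Z2 \<le> Lag X H Y l1 l2 r1 r2 d1 d2 mu Om U Q W e1 e2 Z1 Z2
      - (c - (d2 + mu * (norm Q)^2 * (norm U)^2) / 2) * (norm (W' - W))^2"
  apply (rule grad_step_descent[where f = "\<lambda>V. Lag X H Y l1 l2 r1 r2 d1 d2 mu Om U Q V e1 e2 Z1 Z2", OF _ _ c W'])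
   apply (simp add: Lag_def Ls_W_exp)
  subgoal for h using qW_le[OF mu, of d2 h Q U] by (simp add: algebra_simps)
  done

lemma Om_min:
  fixes X :: "real^'n^'m" and U :: "real^'n^'r" and Q :: "real^'r^'s" and W :: "real^'s^'c"
  assumes m: "\<And>V. Lag X H Y l1 l2 r1 r2 d1 d2 mu Om' U Q W e1 e2 Z1 Z2 \<le> Lag X H Y l1 l2 r1 r2 d1 d2 mu V U Q W e1 e2 Z1 Z2"
    and l2: "l2 \<ge> 0"
  shows "GOm X l2 Om' U = 0"
    and "Lag X H Y l1 l2 r1 r2 d1 d2 mu Om' U Q W e1 e2 Z1 Z2 + (l2/2) * (norm (Om - Om'))^2
         \<le> Lag X H Y l1 l2 r1 r2 d1 d2 mu Om U Q W e1 e2 Z1 Z2"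
proof -
  let ?f = "\<lambda>V. Lag X H Y l1 l2 r1 r2 d1 d2 mu V U Q W e1 e2 Z1 Z2"
  let ?q = "\<lambda>h. (1/2) * (norm (h ** X))^2 + (l2/2) * (norm h)^2"
  have e: "?f (Om' + h) = ?f Om' + inner (GOm X l2 Om' U) h + ?q h" for h
    by (simp add: Lag_def Ls_Om_exp)
  have hom: "?q (t *\<^sub>R h) = t^2 * ?q h" for t h
    by (simp add: mm_lscale power_mult_distrib algebra_simps)
  note mq = min_quad[where f = ?f, OF e hom m]
  show "GOm X l2 Om' U = 0" by (rule mq(1))
  have "?f Om = ?f Om' + ?q (Om - Om')" by (rule mq(2))
  then show "?f Om' + (l2/2) * (norm (Om - Om'))^2 \<le> ?f Om" by simp
qed

lemma e1_min:
  fixes X :: "real^'n^'m" and U :: "real^'n^'r" and Q :: "real^'r^'s" and W :: "real^'s^'c"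
  assumes m: "\<And>V. Lag X H Y l1 l2 r1 r2 d1 d2 mu Om U Q W e1' e2 Z1 Z2 \<le> Lag X H Y l1 l2 r1 r2 d1 d2 mu Om U Q W V e2 Z1 Z2"
  shows "Ge1 H r1 mu U Q e1' Z1 = 0"
    and "Lag X H Y l1 l2 r1 r2 d1 d2 mu Om U Q W e1 e2 Z1 Z2
         = Lag X H Y l1 l2 r1 r2 d1 d2 mu Om U Q W e1' e2 Z1 Z2 + ((r1 + mu)/2) * (norm (e1 - e1'))^2"
proof -
  let ?f = "\<lambda>V. Lag X H Y l1 l2 r1 r2 d1 d2 mu Om U Q W V e2 Z1 Z2"
  let ?q = "\<lambda>h. ((r1 + mu)/2) * (norm h)^2"
  have e: "?f (e1' + h) = ?f e1' + inner (Ge1 H r1 mu U Q e1' Z1) h + ?q h" for h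
    by (simp add: Lag_def Ls_e1_exp)
  have hom: "?q (t *\<^sub>R h) = t^2 * ?q h" for t h
    by (simp add: power_mult_distrib algebra_simps)
  note mq = min_quad[where f = ?f, OF e hom m]
  show "Ge1 H r1 mu U Q e1' Z1 = 0" by (rule mq(1))
  show "?f e1 = ?f e1' + ?q (e1 - e1')" by (rule mq(2))
qed

lemma e2_min:
  fixes X :: "real^'n^'m" and U :: "real^'n^'r" and Q :: "real^'r^'s" and W :: "real^'s^'c"
  assumes m: "\<And>V. Lag X H Y l1 l2 r1 r2 d1 d2 mu Om U Q W e1 e2' Z1 Z2 \<le> Lag X H Y l1 l2 r1 r2 d1 d2 mu Om U Q W e1 V Z1 Z2"
  shows "Ge2 Y r2 mu U Q W e2' Z2 = 0"
    and "Lag X H Y l1 l2 r1 r2 d1 d2 mu Om U Q W e1 e2 Z1 Z2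
         = Lag X H Y l1 l2 r1 r2 d1 d2 mu Om U Q W e1 e2' Z1 Z2 + ((r2 + mu)/2) * (norm (e2 - e2'))^2"
proof -
  let ?f = "\<lambda>V. Lag X H Y l1 l2 r1 r2 d1 d2 mu Om U Q W e1 V Z1 Z2"
  let ?q = "\<lambda>h. ((r2 + mu)/2) * (norm h)^2"
  have e: "?f (e2' + h) = ?f e2' + inner (Ge2 Y r2 mu U Q W e2' Z2) h + ?q h" for h
    by (simp add: Lag_def Ls_e2_exp)
  have hom: "?q (t *\<^sub>R h) = t^2 * ?q h" for t h
    by (simp add: power_mult_distrib algebra_simps)
  note mq = min_quad[where f = ?f, OF e hom m]
  show "Ge2 Y r2 mu U Q W e2' Z2 = 0" by (rule mq(1))
  show "?f e2 = ?f e2' + ?q (e2 - e2')" by (rule mq(2))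
qed

lemma nn0: "norm x * norm x = inner x x" by (metis power2_eq_square power2_norm_eq_inner)

lemma Z_step:
  fixes X :: "real^'n^'m" and U :: "real^'n^'r" and Q :: "real^'r^'s" and W :: "real^'s^'c"
  assumes mu: "mu > 0"
    and z1: "Z1' = Z1 + mu *\<^sub>R (H - Q ** U - e1)" and z2: "Z2' = Z2 + mu *\<^sub>R (Y - W ** Q ** U - e2)"
  shows "Lag X H Y l1 l2 r1 r2 d1 d2 mu Om U Q W e1 e2 Z1' Z2'
     = Lag X H Y l1 l2 r1 r2 d1 d2 mu Om U Q W e1 e2 Z1 Z2 + ((norm (Z1' - Z1))^2 + (norm (Z2' - Z2))^2) / mu"
proof -
  define R1 where "R1 = H - Q ** U - e1"
  define R2 where "R2 = Y - W ** Q ** U - e2"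
  have a: "Z1' - Z1 = mu *\<^sub>R R1" "Z2' - Z2 = mu *\<^sub>R R2" using z1 z2 by (simp_all add: R1_def R2_def)
  have "Lag X H Y l1 l2 r1 r2 d1 d2 mu Om U Q W e1 e2 Z1' Z2'
     = Lag X H Y l1 l2 r1 r2 d1 d2 mu Om U Q W e1 e2 Z1 Z2 + (inner (Z1' - Z1) R1 + inner (Z2' - Z2) R2)"
    unfolding Lag_def Ls_def R1_def R2_def by (simp add: inner_diff_left)
  also have "inner (Z1' - Z1) R1 + inner (Z2' - Z2) R2 = ((norm (Z1' - Z1))^2 + (norm (Z2' - Z2))^2) / mu"
    unfolding a using mu by (simp add: power2_norm_eq_inner field_simps power2_eq_square nn0)
  finally show ?thesis by simp
qed

lemma nn: "norm x * norm x = inner x x" by (metis power2_eq_square power2_norm_eq_inner)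

lemma cross_lb: "mu > 0 \<Longrightarrow> inner Z R + (mu/2) * (norm R)^2 \<ge> -((norm Z)^2 / (2 * mu))"
proof -
  assume mu: "mu > 0"
  have "0 \<le> (norm (Z + mu *\<^sub>R R))^2" by simp
  also have "\<dots> = (norm Z)^2 + 2 * mu * inner Z R + mu^2 * (norm R)^2"
    by (simp add: ns_add power_mult_distrib)
  finally have "0 \<le> (norm Z)^2 + 2 * mu * inner Z R + mu^2 * (norm R)^2" .
  then have "0 \<le> ((norm Z)^2 + 2 * mu * inner Z R + mu^2 * (norm R)^2) / (2 * mu)" using mu by simp
  also have "\<dots> = (norm Z)^2 / (2 * mu) + (inner Z R + (mu/2) * (norm R)^2)"
    using mu by (simp add: field_simps power2_eq_square)
  finally show ?thesis by simp
qed

lemma l1norm_nonneg: "l1norm A \<ge> 0"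
  unfolding l1norm_def by (intro sum_nonneg) auto

lemma sum_sq_le: "finite S \<Longrightarrow> (\<forall>x\<in>S. (f x::real) \<ge> 0) \<Longrightarrow> (\<Sum>x\<in>S. (f x)^2) \<le> (\<Sum>x\<in>S. f x)^2"
proof (induction S rule: finite_induct)
  case empty then show ?case by simp
next
  case (insert a S)
  have nn: "\<forall>x\<in>S. f x \<ge> 0" using insert.prems by blast
  have IH: "(\<Sum>x\<in>S. (f x)^2) \<le> (sum f S)^2" using insert.IH nn by blast
  have s: "sum f S \<ge> 0" using nn by (intro sum_nonneg) blast
  have fa: "f a \<ge> 0" using insert.prems by blast
  have e1: "(\<Sum>x\<in>insert a S. (f x)^2) = (f a)^2 + (\<Sum>x\<in>S. (f x)^2)" using insert.hyps by (rule sum.insert)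
  have e2: "sum f (insert a S) = f a + sum f S" using insert.hyps by (rule sum.insert)
  have "(f a)^2 + (sum f S)^2 \<le> (f a + sum f S)^2"
    using s fa by (simp add: power2_sum)
  then show ?case unfolding e1 e2 using IH by linarith
qed

lemma norm_le_l1norm: "norm A \<le> l1norm A"
proof -
  have "(norm A)^2 = (\<Sum>i\<in>UNIV. \<Sum>j\<in>UNIV. (\<bar>A$i$j\<bar>)^2)" by (simp add: norm2_mat)
  also have "\<dots> \<le> (\<Sum>i\<in>UNIV. (\<Sum>j\<in>UNIV. \<bar>A$i$j\<bar>)^2)"
    by (intro sum_mono sum_sq_le) auto
  also have "\<dots> \<le> (\<Sum>i\<in>UNIV. \<Sum>j\<in>UNIV. \<bar>A$i$j\<bar>)^2"
    by (intro sum_sq_le) (auto intro: sum_nonneg)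
  finally have "(norm A)^2 \<le> (l1norm A)^2" by (simp add: l1norm_def)
  then show ?thesis by (rule power2_le_imp_le[OF _ l1norm_nonneg])
qed

lemma coerc:
  fixes X :: "real^'n^'m" and U :: "real^'n^'r" and Q :: "real^'r^'s" and W :: "real^'s^'c"
  assumes mu: "mu > 0"
  shows "l1 * l1norm U + (d1/2) * (norm Q)^2 + (d2/2) * (norm W)^2 + (l2/2) * (norm Om)^2
      + (r1/2) * (norm e1)^2 + (r2/2) * (norm e2)^2
     \<le> Lag X H Y l1 l2 r1 r2 d1 d2 mu Om U Q W e1 e2 Z1 Z2 + ((norm Z1)^2 + (norm Z2)^2) / (2 * mu)"
proof -
  have a: "inner Z1 (H - Q ** U - e1) + (mu/2) * (norm (H - Q ** U - e1))^2 \<ge> -((norm Z1)^2 / (2 * mu))"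
    by (rule cross_lb[OF mu])
  have b: "inner Z2 (Y - W ** Q ** U - e2) + (mu/2) * (norm (Y - W ** Q ** U - e2))^2 \<ge> -((norm Z2)^2 / (2 * mu))"
    by (rule cross_lb[OF mu])
  have c: "(1/2) * (norm (U - Om ** X))^2 \<ge> 0" by simp
  have s: "((norm Z1)^2 + (norm Z2)^2) / (2 * mu) = (norm Z1)^2 / (2 * mu) + (norm Z2)^2 / (2 * mu)"
    by (simp add: add_divide_distrib)
  have L: "Lag X H Y l1 l2 r1 r2 d1 d2 mu Om U Q W e1 e2 Z1 Z2 = (1/2) * (norm (U - Om ** X))^2
     + (r1/2) * (norm e1)^2 + (r2/2) * (norm e2)^2
     + (inner Z1 (H - Q ** U - e1) + (mu/2) * (norm (H - Q ** U - e1))^2)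
     + (inner Z2 (Y - W ** Q ** U - e2) + (mu/2) * (norm (Y - W ** Q ** U - e2))^2)
     + (d1/2) * (norm Q)^2 + (d2/2) * (norm W)^2 + (l2/2) * (norm Om)^2 + l1 * l1norm U"
    unfolding Lag_def Ls_def by linarith
  show ?thesis unfolding s L using a b c by linarith
qed

lemma grad_U:
  fixes X :: "real^'n^'m" and U :: "real^'n^'r" and Q :: "real^'r^'s" and W :: "real^'s^'c"
  assumes mu: "mu \<ge> 0"
  shows "grad (\<lambda>V. Ls X H Y l2 r1 r2 d1 d2 mu Om V Q W e1 e2 Z1 Z2) U = GU X H Y mu Om U Q W e1 e2 Z1 Z2"
proof (rule grad_eqI, rule gderiv_quad)
  fix h
  show "Ls X H Y l2 r1 r2 d1 d2 mu Om (U + h) Q W e1 e2 Z1 Z2 = Ls X H Y l2 r1 r2 d1 d2 mu Om U Q W e1 e2 Z1 Z2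
     + inner (GU X H Y mu Om U Q W e1 e2 Z1 Z2) h
     + ((1/2) * (norm h)^2 + (mu/2) * (norm (Q ** h))^2 + (mu/2) * (norm (W ** Q ** h))^2)"
    by (simp add: Ls_U_exp)
  have "0 \<le> (1/2) * (norm h)^2 + (mu/2) * (norm (Q ** h))^2 + (mu/2) * (norm (W ** Q ** h))^2"
    using mu by simp
  then show "\<bar>(1/2) * (norm h)^2 + (mu/2) * (norm (Q ** h))^2 + (mu/2) * (norm (W ** Q ** h))^2\<bar>
     \<le> ((1 + mu * (norm Q)^2 + mu * (norm W)^2 * (norm Q)^2) / 2) * (norm h)^2"
    using qU_le[OF mu, of h Q W] by simp
qed

lemma grad_Q:
  fixes X :: "real^'n^'m" and U :: "real^'n^'r" and Q :: "real^'r^'s" and W :: "real^'s^'c"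
  assumes mu: "mu \<ge> 0" and d1: "d1 \<ge> 0"
  shows "grad (\<lambda>V. Lag X H Y l1 l2 r1 r2 d1 d2 mu Om U V W e1 e2 Z1 Z2) Q = GQ X H Y d1 mu Om U Q W e1 e2 Z1 Z2"
proof (rule grad_eqI, rule gderiv_quad)
  fix h
  show "Lag X H Y l1 l2 r1 r2 d1 d2 mu Om U (Q + h) W e1 e2 Z1 Z2 = Lag X H Y l1 l2 r1 r2 d1 d2 mu Om U Q W e1 e2 Z1 Z2
     + inner (GQ X H Y d1 mu Om U Q W e1 e2 Z1 Z2) h
     + ((d1/2) * (norm h)^2 + (mu/2) * (norm (h ** U))^2 + (mu/2) * (norm (W ** h ** U))^2)"
    by (simp add: Lag_def Ls_Q_exp)
  have "0 \<le> (d1/2) * (norm h)^2 + (mu/2) * (norm (h ** U))^2 + (mu/2) * (norm (W ** h ** U))^2"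
    using mu d1 by simp
  then show "\<bar>(d1/2) * (norm h)^2 + (mu/2) * (norm (h ** U))^2 + (mu/2) * (norm (W ** h ** U))^2\<bar>
     \<le> ((d1 + mu * (norm U)^2 + mu * (norm W)^2 * (norm U)^2) / 2) * (norm h)^2"
    using qQ_le[OF mu, of d1 h U W] by simp
qed

lemma grad_W:
  fixes X :: "real^'n^'m" and U :: "real^'n^'r" and Q :: "real^'r^'s" and W :: "real^'s^'c"
  assumes mu: "mu \<ge> 0" and d2: "d2 \<ge> 0"
  shows "grad (\<lambda>V. Lag X H Y l1 l2 r1 r2 d1 d2 mu Om U Q V e1 e2 Z1 Z2) W = GW X H Y d2 mu Om U Q W e1 e2 Z1 Z2"
proof (rule grad_eqI, rule gderiv_quad)
  fix h
  show "Lag X H Y l1 l2 r1 r2 d1 d2 mu Om U Q (W + h) e1 e2 Z1 Z2 = Lag X H Y l1 l2 r1 r2 d1 d2 mu Om U Q W e1 e2 Z1 Z2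
     + inner (GW X H Y d2 mu Om U Q W e1 e2 Z1 Z2) h
     + ((d2/2) * (norm h)^2 + (mu/2) * (norm (h ** Q ** U))^2)"
    by (simp add: Lag_def Ls_W_exp)
  have "0 \<le> (d2/2) * (norm h)^2 + (mu/2) * (norm (h ** Q ** U))^2"
    using mu d2 by simp
  then show "\<bar>(d2/2) * (norm h)^2 + (mu/2) * (norm (h ** Q ** U))^2\<bar>
     \<le> ((d2 + mu * (norm Q)^2 * (norm U)^2) / 2) * (norm h)^2"
    using qW_le[OF mu, of d2 h Q U] by simp
qed

lemma bounds:
  fixes X :: "real^'n^'m" and U :: "real^'n^'r" and Q :: "real^'r^'s" and W :: "real^'s^'c"
  assumes pos: "l1 > 0" "l2 > 0" "r1 > 0" "r2 > 0" "d1 > 0" "d2 > 0" "mu > 0"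
    and b: "Lag X H Y l1 l2 r1 r2 d1 d2 mu Om U Q W e1 e2 Z1 Z2 + ((norm Z1)^2 + (norm Z2)^2) / (2 * mu) \<le> LS"
  shows "(norm Q)^2 \<le> 2 * LS / d1" "(norm W)^2 \<le> 2 * LS / d2" "norm U \<le> LS / l1"
    "(norm Om)^2 \<le> 2 * LS / l2" "(norm e1)^2 \<le> 2 * LS / r1" "(norm e2)^2 \<le> 2 * LS / r2" "LS \<ge> 0"
proof -
  note c = coerc[OF pos(7), of l1 U d1 Q d2 W l2 Om r1 e1 r2 e2 X H Y Z1 Z2]
  have n: "0 \<le> l1 * l1norm U" "0 \<le> (d1/2) * (norm Q)^2" "0 \<le> (d2/2) * (norm W)^2" "0 \<le> (l2/2) * (norm Om)^2"
    "0 \<le> (r1/2) * (norm e1)^2" "0 \<le> (r2/2) * (norm e2)^2"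
    using pos l1norm_nonneg[of U] by auto
  have u: "l1 * norm U \<le> l1 * l1norm U" using norm_le_l1norm[of U] pos by simp
  have s: "l1 * l1norm U + (d1/2) * (norm Q)^2 + (d2/2) * (norm W)^2 + (l2/2) * (norm Om)^2
      + (r1/2) * (norm e1)^2 + (r2/2) * (norm e2)^2 \<le> LS" using c b by linarith
  show "LS \<ge> 0" using s n by linarith
  have "(d1/2) * (norm Q)^2 \<le> LS" using s n by linarith
  then show "(norm Q)^2 \<le> 2 * LS / d1" using pos by (simp add: field_simps)
  have "(d2/2) * (norm W)^2 \<le> LS" using s n by linarith
  then show "(norm W)^2 \<le> 2 * LS / d2" using pos by (simp add: field_simps)
  have "(l2/2) * (norm Om)^2 \<le> LS" using s n by linarith
  then show "(norm Om)^2 \<le> 2 * LS / l2" using pos by (simp add: field_simps)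
  have "(r1/2) * (norm e1)^2 \<le> LS" using s n by linarith
  then show "(norm e1)^2 \<le> 2 * LS / r1" using pos by (simp add: field_simps)
  have "(r2/2) * (norm e2)^2 \<le> LS" using s n by linarith
  then show "(norm e2)^2 \<le> 2 * LS / r2" using pos by (simp add: field_simps)
  have "l1 * norm U \<le> LS" using s n u by linarith
  then show "norm U \<le> LS / l1" using pos by (simp add: field_simps)
qed

lemma pm: "0 \<le> (a::real) \<Longrightarrow> a \<le> A \<Longrightarrow> 0 \<le> b \<Longrightarrow> b \<le> B \<Longrightarrow> 0 \<le> mu \<Longrightarrow> mu * a * b \<le> mu * A * B"
proof -
  assume h: "0 \<le> a" "a \<le> A" "0 \<le> b" "b \<le> B" "0 \<le> mu"
  have "a * b \<le> A * B" using h by (intro mult_mono) auto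
  then have "mu * (a * b) \<le> mu * (A * B)" using h by (simp add: mult_left_mono)
  then show ?thesis by (simp add: mult.assoc)
qed

lemma sq_bound: "norm (x::'a::real_normed_vector) \<le> B \<Longrightarrow> (norm x)^2 \<le> B^2"
  by (simp add: power_mono)

lemma one_step:
  fixes X :: "real^'n^'m" and U U' :: "real^'n^'r" and Q Q' :: "real^'r^'s" and W W' :: "real^'s^'c"
    and Om Om' :: "real^'m^'r" and e1 e1' :: "real^'n^'s" and e2 e2' :: "real^'n^'c"
    and Z1 :: "real^'n^'s" and Z2 :: "real^'n^'c"
  assumes pos: "l1 > 0" "l2 > 0" "r1 > 0" "r2 > 0" "d1 > 0" "d2 > 0" "mu > 0"
    and b: "Lag X H Y l1 l2 r1 r2 d1 d2 mu Om U Q W e1 e2 Z1 Z2 + ((norm Z1)^2 + (norm Z2)^2) / (2 * mu) \<le> LS"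
    and cu: "cu \<ge> (1 + mu * (2*LS/d1) + mu * (2*LS/d2) * (2*LS/d1)) / 2 + 1"
    and cq: "cq \<ge> (d1 + mu * (LS/l1)^2 + mu * (2*LS/d2) * (LS/l1)^2) / 2 + 1"
    and cw: "cw \<ge> (d2 + mu * (2*LS/d1) * (LS/l1)^2) / 2 + 1"
    and U': "U' = soft (l1 / cu) (U - (1 / cu) *\<^sub>R GU X H Y mu Om U Q W e1 e2 Z1 Z2)"
    and Q': "Q' = Q - (1 / cq) *\<^sub>R GQ X H Y d1 mu Om U' Q W e1 e2 Z1 Z2"
    and W': "W' = W - (1 / cw) *\<^sub>R GW X H Y d2 mu Om U' Q' W e1 e2 Z1 Z2"
    and mOm: "\<And>V. Lag X H Y l1 l2 r1 r2 d1 d2 mu Om' U' Q' W' e1 e2 Z1 Z2 \<le> Lag X H Y l1 l2 r1 r2 d1 d2 mu V U' Q' W' e1 e2 Z1 Z2"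
    and me1: "\<And>V. Lag X H Y l1 l2 r1 r2 d1 d2 mu Om' U' Q' W' e1' e2 Z1 Z2 \<le> Lag X H Y l1 l2 r1 r2 d1 d2 mu Om' U' Q' W' V e2 Z1 Z2"
    and me2: "\<And>V. Lag X H Y l1 l2 r1 r2 d1 d2 mu Om' U' Q' W' e1' e2' Z1 Z2 \<le> Lag X H Y l1 l2 r1 r2 d1 d2 mu Om' U' Q' W' e1' V Z1 Z2"
  shows "Lag X H Y l1 l2 r1 r2 d1 d2 mu Om' U' Q' W' e1' e2' Z1 Z2 + ((norm (U' - U))^2 + (norm (Q' - Q))^2 + (norm (W' - W))^2
          + (l2/2) * (norm (Om - Om'))^2 + ((r1+mu)/2) * (norm (e1 - e1'))^2 + ((r2+mu)/2) * (norm (e2 - e2'))^2)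
        \<le> Lag X H Y l1 l2 r1 r2 d1 d2 mu Om U Q W e1 e2 Z1 Z2"
    and "GOm X l2 Om' U' = 0" and "Ge1 H r1 mu U' Q' e1' Z1 = 0" and "Ge2 Y r2 mu U' Q' W' e2' Z2 = 0"
proof -
  define Zt where "Zt = ((norm Z1)^2 + (norm Z2)^2) / (2 * mu)"
  define L0 where "L0 = Lag X H Y l1 l2 r1 r2 d1 d2 mu Om U Q W e1 e2 Z1 Z2"
  define L1 where "L1 = Lag X H Y l1 l2 r1 r2 d1 d2 mu Om U' Q W e1 e2 Z1 Z2"
  define L2 where "L2 = Lag X H Y l1 l2 r1 r2 d1 d2 mu Om U' Q' W e1 e2 Z1 Z2"
  define L3 where "L3 = Lag X H Y l1 l2 r1 r2 d1 d2 mu Om U' Q' W' e1 e2 Z1 Z2"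
  define L4 where "L4 = Lag X H Y l1 l2 r1 r2 d1 d2 mu Om' U' Q' W' e1 e2 Z1 Z2"
  define L5 where "L5 = Lag X H Y l1 l2 r1 r2 d1 d2 mu Om' U' Q' W' e1' e2 Z1 Z2"
  define L6 where "L6 = Lag X H Y l1 l2 r1 r2 d1 d2 mu Om' U' Q' W' e1' e2' Z1 Z2"
  have mu0: "mu \<ge> 0" using pos by simp
  note B0 = bounds[OF pos b]
  have LS0: "LS \<ge> 0" by (rule B0(7))
  have cU: "(1 + mu * (norm Q)^2 + mu * (norm W)^2 * (norm Q)^2) / 2 \<le> (1 + mu * (2*LS/d1) + mu * (2*LS/d2) * (2*LS/d1)) / 2"
  proof -
    have "mu * (norm Q)^2 \<le> mu * (2*LS/d1)" by (rule mult_left_mono[OF B0(1) mu0])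
    moreover have "mu * (norm W)^2 * (norm Q)^2 \<le> mu * (2*LS/d2) * (2*LS/d1)"
      using B0(1,2) mu0 by (intro pm) auto
    ultimately show ?thesis by simp
  qed
  have cu0: "cu > 0" using cu cU by (smt (verit) zero_le_power2 mult_nonneg_nonneg mu0 divide_nonneg_nonneg)
  have "L1 \<le> L0 - (cu - (1 + mu * (norm Q)^2 + mu * (norm W)^2 * (norm Q)^2) / 2) * (norm (U' - U))^2"
    unfolding L0_def L1_def using pos by (intro U_descent[OF cu0 _ mu0 U']) simp
  moreover have "(norm (U' - U))^2 \<le> (cu - (1 + mu * (norm Q)^2 + mu * (norm W)^2 * (norm Q)^2) / 2) * (norm (U' - U))^2"
  proof -
    have "1 \<le> cu - (1 + mu * (norm Q)^2 + mu * (norm W)^2 * (norm Q)^2) / 2" using cu cU by linarith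
    then show ?thesis by (metis mult_right_mono mult_1 zero_le_power2)
  qed
  ultimately have s1: "L1 + (norm (U' - U))^2 \<le> L0" by linarith
  note B1 = bounds[OF pos, of X H Y Om U' Q W e1 e2 Z1 Z2 LS]
  have b1: "L1 + Zt \<le> LS" using s1 b unfolding L0_def Zt_def by (smt (verit) zero_le_power2)
  have nU': "(norm U')^2 \<le> (LS/l1)^2" using B1(3) b1 unfolding L1_def Zt_def by (intro sq_bound) simp
  have cQ: "(d1 + mu * (norm U')^2 + mu * (norm W)^2 * (norm U')^2) / 2 \<le> (d1 + mu * (LS/l1)^2 + mu * (2*LS/d2) * (LS/l1)^2) / 2"
  proof -
    have "mu * (norm U')^2 \<le> mu * (LS/l1)^2" by (rule mult_left_mono[OF nU' mu0])
    moreover have "mu * (norm W)^2 * (norm U')^2 \<le> mu * (2*LS/d2) * (LS/l1)^2"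
      using B0(2) nU' mu0 by (intro pm) auto
    ultimately show ?thesis by simp
  qed
  have cq0: "cq > 0" using cq cQ pos by (smt (verit) zero_le_power2 mult_nonneg_nonneg mu0 divide_nonneg_nonneg)
  have "L2 \<le> L1 - (cq - (d1 + mu * (norm U')^2 + mu * (norm W)^2 * (norm U')^2) / 2) * (norm (Q' - Q))^2"
    unfolding L1_def L2_def by (rule Q_descent[OF cq0 mu0 Q'])
  moreover have "(norm (Q' - Q))^2 \<le> (cq - (d1 + mu * (norm U')^2 + mu * (norm W)^2 * (norm U')^2) / 2) * (norm (Q' - Q))^2"
  proof -
    have "1 \<le> cq - (d1 + mu * (norm U')^2 + mu * (norm W)^2 * (norm U')^2) / 2" using cq cQ by linarith
    then show ?thesis by (metis mult_right_mono mult_1 zero_le_power2)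
  qed
  ultimately have s2: "L2 + (norm (Q' - Q))^2 \<le> L1" by linarith
  note B2 = bounds[OF pos, of X H Y Om U' Q' W e1 e2 Z1 Z2 LS]
  have b2: "L2 + Zt \<le> LS" using s2 b1 by (smt (verit) zero_le_power2)
  have nQ': "(norm Q')^2 \<le> 2*LS/d1" using B2(1) b2 unfolding L2_def Zt_def by simp
  have cW: "(d2 + mu * (norm Q')^2 * (norm U')^2) / 2 \<le> (d2 + mu * (2*LS/d1) * (LS/l1)^2) / 2"
  proof -
    have "mu * (norm Q')^2 * (norm U')^2 \<le> mu * (2*LS/d1) * (LS/l1)^2"
      using nQ' nU' mu0 by (intro pm) auto
    then show ?thesis by simp
  qed
  have cw0: "cw > 0" using cw cW pos by (smt (verit) zero_le_power2 mult_nonneg_nonneg mu0 divide_nonneg_nonneg)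
  have "L3 \<le> L2 - (cw - (d2 + mu * (norm Q')^2 * (norm U')^2) / 2) * (norm (W' - W))^2"
    unfolding L2_def L3_def by (rule W_descent[OF cw0 mu0 W'])
  moreover have "(norm (W' - W))^2 \<le> (cw - (d2 + mu * (norm Q')^2 * (norm U')^2) / 2) * (norm (W' - W))^2"
  proof -
    have "1 \<le> cw - (d2 + mu * (norm Q')^2 * (norm U')^2) / 2" using cw cW by linarith
    then show ?thesis by (metis mult_right_mono mult_1 zero_le_power2)
  qed
  ultimately have s3: "L3 + (norm (W' - W))^2 \<le> L2" by linarith
  note O = Om_min(1)[OF mOm] Om_min(2)[where Om=Om, OF mOm]
  have s4: "L4 + (l2/2) * (norm (Om - Om'))^2 \<le> L3" unfolding L3_def L4_def using O(2) pos by simp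
    have s5: "L4 = L5 + ((r1+mu)/2) * (norm (e1 - e1'))^2" unfolding L4_def L5_def by (rule e1_min(2)[OF me1])
    have s6: "L5 = L6 + ((r2+mu)/2) * (norm (e2 - e2'))^2" unfolding L5_def L6_def by (rule e2_min(2)[OF me2])
  show "L6 + ((norm (U' - U))^2 + (norm (Q' - Q))^2 + (norm (W' - W))^2
          + (l2/2) * (norm (Om - Om'))^2 + ((r1+mu)/2) * (norm (e1 - e1'))^2 + ((r2+mu)/2) * (norm (e2 - e2'))^2) \<le> L0"
    unfolding L6_def[symmetric] L0_def[symmetric] using s1 s2 s3 s4 s5 s6 by linarith
  show "GOm X l2 Om' U' = 0" using O(1) pos by simp
  show "Ge1 H r1 mu U' Q' e1' Z1 = 0" by (rule e1_min(1)[OF me1])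
  show "Ge2 Y r2 mu U' Q' W' e2' Z2 = 0" by (rule e2_min(1)[OF me2])
qed

lemma tendsto_transpose [tendsto_intros]:
  fixes f :: "'a \<Rightarrow> real^'n^'m"
  assumes "(f \<longlongrightarrow> a) F"
  shows "((\<lambda>x. transpose (f x)) \<longlongrightarrow> transpose a) F"
proof (rule vec_tendstoI, rule vec_tendstoI)
  fix i j
  show "((\<lambda>x. transpose (f x) $ i $ j) \<longlongrightarrow> transpose a $ i $ j) F"
    unfolding transpose_def using assms by (simp add: tendsto_vec_nth)
qed

lemma tendsto_l1norm [tendsto_intros]:
  fixes f :: "'a \<Rightarrow> real^'n^'m"
  assumes "(f \<longlongrightarrow> a) F"
  shows "((\<lambda>x. l1norm (f x)) \<longlongrightarrow> l1norm a) F"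
  unfolding l1norm_def using assms by (intro tendsto_intros)

lemma tendsto_GU:
  assumes "(Om' \<longlongrightarrow> Om) F" "(U' \<longlongrightarrow> U) F" "(Q' \<longlongrightarrow> Q) F" "(W' \<longlongrightarrow> W) F"
    "(e1' \<longlongrightarrow> e1) F" "(e2' \<longlongrightarrow> e2) F" "(Z1' \<longlongrightarrow> Z1) F" "(Z2' \<longlongrightarrow> Z2) F"
  shows "((\<lambda>x. GU X H Y mu (Om' x) (U' x) (Q' x) (W' x) (e1' x) (e2' x) (Z1' x) (Z2' x))
     \<longlongrightarrow> GU X H Y mu Om U Q W e1 e2 Z1 Z2) F"
  unfolding GU_def using assms by (intro tendsto_intros)

lemma tendsto_GQ:
  assumes "(U' \<longlongrightarrow> U) F" "(Q' \<longlongrightarrow> Q) F" "(W' \<longlongrightarrow> W) F"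
    "(e1' \<longlongrightarrow> e1) F" "(e2' \<longlongrightarrow> e2) F" "(Z1' \<longlongrightarrow> Z1) F" "(Z2' \<longlongrightarrow> Z2) F"
  shows "((\<lambda>x. GQ X H Y d1 mu (Om' x) (U' x) (Q' x) (W' x) (e1' x) (e2' x) (Z1' x) (Z2' x))
     \<longlongrightarrow> GQ X H Y d1 mu Om U Q W e1 e2 Z1 Z2) F"
  unfolding GQ_def using assms by (intro tendsto_intros)

lemma tendsto_GW:
  assumes "(U' \<longlongrightarrow> U) F" "(Q' \<longlongrightarrow> Q) F" "(W' \<longlongrightarrow> W) F"
    "(e2' \<longlongrightarrow> e2) F" "(Z2' \<longlongrightarrow> Z2) F"
  shows "((\<lambda>x. GW X H Y d2 mu (Om' x) (U' x) (Q' x) (W' x) (e1' x) (e2' x) (Z1' x) (Z2' x))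
     \<longlongrightarrow> GW X H Y d2 mu Om U Q W e1 e2 Z1 Z2) F"
  unfolding GW_def using assms by (intro tendsto_intros)

lemma tendsto_GOm:
  assumes "(Om' \<longlongrightarrow> Om) F" "(U' \<longlongrightarrow> U) F"
  shows "((\<lambda>x. GOm X l2 (Om' x) (U' x)) \<longlongrightarrow> GOm X l2 Om U) F"
  unfolding GOm_def using assms by (intro tendsto_intros)

lemma tendsto_Ge1:
  assumes "(U' \<longlongrightarrow> U) F" "(Q' \<longlongrightarrow> Q) F" "(e1' \<longlongrightarrow> e1) F" "(Z1' \<longlongrightarrow> Z1) F"
  shows "((\<lambda>x. Ge1 H r1 mu (U' x) (Q' x) (e1' x) (Z1' x)) \<longlongrightarrow> Ge1 H r1 mu U Q e1 Z1) F"
  unfolding Ge1_def using assms by (intro tendsto_intros)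

lemma tendsto_Ge2:
  assumes "(U' \<longlongrightarrow> U) F" "(Q' \<longlongrightarrow> Q) F" "(W' \<longlongrightarrow> W) F" "(e2' \<longlongrightarrow> e2) F" "(Z2' \<longlongrightarrow> Z2) F"
  shows "((\<lambda>x. Ge2 Y r2 mu (U' x) (Q' x) (W' x) (e2' x) (Z2' x)) \<longlongrightarrow> Ge2 Y r2 mu U Q W e2 Z2) F"
  unfolding Ge2_def using assms by (intro tendsto_intros)

lemma thnorm_tuple: "thnorm (a,b,c,d,e,f,g,h) = max (norm a) (max (norm b) (max (norm c)
   (max (norm d) (max (norm e) (max (norm f) (max (norm g) (norm h)))))))"
  unfolding thnorm_def by (simp only: prod.case)

lemma thnorm_alt: "thnorm T = max (norm (fst T)) (max (norm (fst (snd T))) (max (norm (fst (snd (snd T))))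
   (max (norm (fst (snd (snd (snd T))))) (max (norm (fst (snd (snd (snd (snd T))))))
   (max (norm (fst (snd (snd (snd (snd (snd T))))))) (max (norm (fst (snd (snd (snd (snd (snd (snd T))))))))
     (norm (snd (snd (snd (snd (snd (snd (snd T))))))))))))))"
  using thnorm_tuple[of "fst T" "fst (snd T)" "fst (snd (snd T))" "fst (snd (snd (snd T)))"
     "fst (snd (snd (snd (snd T))))" "fst (snd (snd (snd (snd (snd T)))))"
     "fst (snd (snd (snd (snd (snd (snd T))))))" "snd (snd (snd (snd (snd (snd (snd T))))))"]
  by (simp only: prod.collapse)

lemma tendsto_thnorm:
  fixes f :: "'a \<Rightarrow> ('m::finite,'n::finite,'r::finite,'s::finite,'c::finite) theta"
  assumes "(f \<longlongrightarrow> a) F"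
  shows "((\<lambda>x. thnorm (f x)) \<longlongrightarrow> thnorm a) F"
  unfolding thnorm_alt using assms by (intro tendsto_intros)

lemma nfst: "norm (fst x) \<le> norm x" by (metis norm_fst_le prod.collapse)
lemma nsnd: "norm (snd x) \<le> norm x" by (metis norm_snd_le prod.collapse)

lemma thnorm_le_norm: "thnorm (T::('m::finite,'n::finite,'r::finite,'s::finite,'c::finite) theta) \<le> norm T"
proof -
  note F = nfst and S = nsnd
  have "norm (fst T) \<le> norm T" by (rule F)
  moreover have "norm (fst (snd T)) \<le> norm T" by (rule order_trans[OF F S])
  moreover have "norm (fst (snd (snd T))) \<le> norm T" by (rule order_trans[OF F order_trans[OF S S]])
  moreover have "norm (fst (snd (snd (snd T)))) \<le> norm T" by (rule order_trans[OF F order_trans[OF S order_trans[OF S S]]])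
  moreover have "norm (fst (snd (snd (snd (snd T))))) \<le> norm T"
    by (rule order_trans[OF F order_trans[OF S order_trans[OF S order_trans[OF S S]]]])
  moreover have "norm (fst (snd (snd (snd (snd (snd T)))))) \<le> norm T"
    by (rule order_trans[OF F order_trans[OF S order_trans[OF S order_trans[OF S order_trans[OF S S]]]]])
  moreover have "norm (fst (snd (snd (snd (snd (snd (snd T))))))) \<le> norm T"
    by (rule order_trans[OF F order_trans[OF S order_trans[OF S order_trans[OF S order_trans[OF S order_trans[OF S S]]]]]])
  moreover have "norm (snd (snd (snd (snd (snd (snd (snd T))))))) \<le> norm T"
    by (rule order_trans[OF S order_trans[OF S order_trans[OF S order_trans[OF S order_trans[OF S order_trans[OF S S]]]]]])
  ultimately show ?thesis unfolding thnorm_alt max.bounded_iff by blast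
qed

lemma thnorm_nonneg: "thnorm T \<ge> 0"
  unfolding thnorm_alt by (rule order_trans[OF norm_ge_zero max.cobounded1])

lemma norm_le_sq: "(norm x)^2 \<le> a \<Longrightarrow> norm x \<le> 1 + a"
proof -
  assume h: "(norm x)^2 \<le> a"
  show ?thesis
  proof (cases "norm x \<le> 1")
    case True then show ?thesis using h by (smt (verit) zero_le_power2)
  next
    case False
    then have "1 * norm x \<le> norm x * norm x" by (intro mult_right_mono) auto
    then have "norm x \<le> (norm x)^2" by (simp add: power2_eq_square)
    then show ?thesis using h by simp
  qed
qed

lemma sq_to_zero:
  assumes "((\<lambda>k. (norm (f k))^2) \<longlongrightarrow> 0) F"
  shows "(f \<longlongrightarrow> 0) F"
proof -
  have "((\<lambda>k. sqrt ((norm (f k))^2)) \<longlongrightarrow> sqrt 0) F" by (intro tendsto_intros assms)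
  then have "((\<lambda>k. norm (f k)) \<longlongrightarrow> 0) F" by simp
  then show ?thesis by (rule tendsto_norm_zero_cancel)
qed

lemma squeeze0:
  fixes a b :: "nat \<Rightarrow> real"
  assumes "\<And>k. 0 \<le> a k" "\<And>k. c * a k \<le> b k" "c > 0" "b \<longlonglongrightarrow> 0"
  shows "a \<longlonglongrightarrow> 0"
proof (rule real_tendsto_sandwich[of "\<lambda>k. 0" _ _ "\<lambda>k. b k / c"])
  show "\<forall>\<^sub>F n in sequentially. 0 \<le> a n" using assms by simp
  show "\<forall>\<^sub>F n in sequentially. a n \<le> b n / c" using assms
    by (simp add: pos_le_divide_eq mult.commute)
  show "(\<lambda>k. 0) \<longlonglongrightarrow> (0::real)" by simp
  have "(\<lambda>k. b k / c) \<longlonglongrightarrow> 0 / c" using assms by (auto intro!: tendsto_intros)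
  then show "(\<lambda>k. b k / c) \<longlonglongrightarrow> 0" by simp
qed

lemma norm_diff_sq_le: "(norm (a - (b::'a::real_inner)))^2 \<le> 2 * (norm a)^2 + 2 * (norm b)^2"
proof -
  have "0 \<le> (norm (a + b))^2" by simp
  then show ?thesis by (simp add: ns_add ns_diff)
qed

lemma coerc_eq:
  fixes X :: "real^'n^'m" and U :: "real^'n^'r" and Q :: "real^'r^'s" and W :: "real^'s^'c"
  assumes pos: "l1 > 0" "l2 > 0" "r1 > 0" "r2 > 0" "d1 > 0" "d2 > 0" "mu > 0"
    and z: "Z1 = r1 *\<^sub>R e1" "Z2 = r2 *\<^sub>R e2"
  shows "(r1/2 - r1^2/(2*mu)) * (norm e1)^2 + (r2/2 - r2^2/(2*mu)) * (norm e2)^2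
       \<le> Lag X H Y l1 l2 r1 r2 d1 d2 mu Om U Q W e1 e2 Z1 Z2"
    and "((norm Z1)^2 + (norm Z2)^2) / (2 * mu) = r1^2/(2*mu) * (norm e1)^2 + r2^2/(2*mu) * (norm e2)^2"
proof -
  have zz: "((norm Z1)^2 + (norm Z2)^2) / (2 * mu) = r1^2/(2*mu) * (norm e1)^2 + r2^2/(2*mu) * (norm e2)^2"
    using pos unfolding z by (simp add: power_mult_distrib add_divide_distrib)
  then show "((norm Z1)^2 + (norm Z2)^2) / (2 * mu) = r1^2/(2*mu) * (norm e1)^2 + r2^2/(2*mu) * (norm e2)^2" .
  note c = coerc[OF pos(7), of l1 U d1 Q d2 W l2 Om r1 e1 r2 e2 X H Y Z1 Z2]
  have n: "0 \<le> l1 * l1norm U" "0 \<le> (d1/2) * (norm Q)^2" "0 \<le> (d2/2) * (norm W)^2" "0 \<le> (l2/2) * (norm Om)^2"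
    using pos l1norm_nonneg[of U] by auto
  have e: "(r1/2 - r1^2/(2*mu)) * (norm e1)^2 + (r2/2 - r2^2/(2*mu)) * (norm e2)^2
     = (r1/2) * (norm e1)^2 + (r2/2) * (norm e2)^2 - (r1^2/(2*mu) * (norm e1)^2 + r2^2/(2*mu) * (norm e2)^2)"
    by (simp add: algebra_simps)
  show "(r1/2 - r1^2/(2*mu)) * (norm e1)^2 + (r2/2 - r2^2/(2*mu)) * (norm e2)^2
       \<le> Lag X H Y l1 l2 r1 r2 d1 d2 mu Om U Q W e1 e2 Z1 Z2"
    unfolding e using c n zz by linarith
qed

lemma zt_bound:
  fixes k1 k2 mu x1 x2 L B Z r1 r2 :: real
  assumes "k1 > 0" "k2 > 0" "mu > 0" "x1 \<ge> 0" "x2 \<ge> 0" "k1 * x1 + k2 * x2 \<le> L"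
    "Z = r1^2/(2*mu) * x1 + r2^2/(2*mu) * x2" "L \<le> B"
  shows "L + Z \<le> (1 + (r1^2/k1 + r2^2/k2)/(2*mu)) * B" and "L \<ge> 0"
proof -
  have x1: "x1 \<le> L / k1" using assms by (simp add: field_simps) (smt (verit) mult_nonneg_nonneg)
  have x2: "x2 \<le> L / k2" using assms by (simp add: field_simps) (smt (verit) mult_nonneg_nonneg)
  show L0: "L \<ge> 0" using assms by (smt (verit) mult_nonneg_nonneg)
  have c1: "r1^2/(2*mu) \<ge> 0" "r2^2/(2*mu) \<ge> 0" using assms by auto
  have "Z \<le> r1^2/(2*mu) * (L / k1) + r2^2/(2*mu) * (L / k2)"
    unfolding assms(7) using x1 x2 c1 by (intro add_mono mult_left_mono) auto
  also have "\<dots> = ((r1^2/k1 + r2^2/k2)/(2*mu)) * L" using assms by (simp add: field_simps)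
  also have "\<dots> \<le> ((r1^2/k1 + r2^2/k2)/(2*mu)) * B" using assms by (intro mult_left_mono) auto
  finally have "Z \<le> ((r1^2/k1 + r2^2/k2)/(2*mu)) * B" .
  then show "L + Z \<le> (1 + (r1^2/k1 + r2^2/k2)/(2*mu)) * B" using assms(8) by (simp add: algebra_simps)
qed

lemma shift_lim:
  fixes f :: "nat \<Rightarrow> 'a::real_normed_vector"
  assumes "(\<lambda>j. f (phi j)) \<longlonglongrightarrow> a" "(\<lambda>k. f (Suc k) - f k) \<longlonglongrightarrow> 0" "strict_mono phi"
  shows "(\<lambda>j. f (Suc (phi j))) \<longlonglongrightarrow> a"
proof -
  have "((\<lambda>k. f (Suc k) - f k) \<circ> phi) \<longlonglongrightarrow> 0" by (rule LIMSEQ_subseq_LIMSEQ[OF assms(2,3)])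
  then have "(\<lambda>j. f (phi j) + (f (Suc (phi j)) - f (phi j))) \<longlonglongrightarrow> a + 0"
    using assms(1) by (intro tendsto_add) (simp_all add: o_def)
  then show ?thesis by simp
qed

lemma lim_zero:
  fixes f :: "nat \<Rightarrow> 'a::real_normed_vector"
  assumes "(f \<longlongrightarrow> a) sequentially" "\<And>j. f j = 0"
  shows "a = 0"
proof -
  have "f = (\<lambda>j. 0)" using assms(2) by auto
  then have "(\<lambda>j. 0) \<longlonglongrightarrow> a" using assms(1) by simp
  then show ?thesis by (simp add: LIMSEQ_const_iff)
qed

lemma comps_le_thnorm:
  shows "norm (fst T) \<le> thnorm T" "norm (fst (snd T)) \<le> thnorm T" "norm (fst (snd (snd T))) \<le> thnorm T"
    "norm (fst (snd (snd (snd T)))) \<le> thnorm T" "norm (fst (snd (snd (snd (snd T))))) \<le> thnorm T"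
    "norm (fst (snd (snd (snd (snd (snd T)))))) \<le> thnorm T"
    "norm (fst (snd (snd (snd (snd (snd (snd T))))))) \<le> thnorm T"
    "norm (snd (snd (snd (snd (snd (snd (snd T))))))) \<le> thnorm T"
  unfolding thnorm_alt
  by (meson max.cobounded1 max.cobounded2 order_trans)+

lemma norm_Pair_le': "norm x \<le> norm (fst x) + norm (snd x)"
  by (metis norm_Pair_le prod.collapse)

lemma norm_le_8thnorm: "norm (T::('m::finite,'n::finite,'r::finite,'s::finite,'c::finite) theta) \<le> 8 * thnorm T"
proof -
  note P = norm_Pair_le'
  note C = comps_le_thnorm[of T]
  have "norm T \<le> norm (fst T) + norm (snd T)" by (rule P)
  moreover have "norm (snd T) \<le> norm (fst (snd T)) + norm (snd (snd T))" by (rule P)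
  moreover have "norm (snd (snd T)) \<le> norm (fst (snd (snd T))) + norm (snd (snd (snd T)))" by (rule P)
  moreover have "norm (snd (snd (snd T))) \<le> norm (fst (snd (snd (snd T)))) + norm (snd (snd (snd (snd T))))" by (rule P)
  moreover have "norm (snd (snd (snd (snd T)))) \<le> norm (fst (snd (snd (snd (snd T))))) + norm (snd (snd (snd (snd (snd T)))))" by (rule P)
  moreover have "norm (snd (snd (snd (snd (snd T))))) \<le> norm (fst (snd (snd (snd (snd (snd T)))))) + norm (snd (snd (snd (snd (snd (snd T))))))" by (rule P)
  moreover have "norm (snd (snd (snd (snd (snd (snd T)))))) \<le> norm (fst (snd (snd (snd (snd (snd (snd T))))))) + norm (snd (snd (snd (snd (snd (snd (snd T)))))))" by (rule P)
  ultimately show ?thesis using C by linarith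
qed

lemma conv_from_dec:
  fixes f :: "nat \<Rightarrow> 'a::real_normed_vector"
  assumes "\<And>k. c * (norm (f (Suc (Suc k)) - f (Suc k)))^2 \<le> b k" "c > 0" "b \<longlonglongrightarrow> 0"
  shows "(\<lambda>k. f (Suc k) - f k) \<longlonglongrightarrow> 0"
proof -
  have "(\<lambda>k. (norm (f (Suc (Suc k)) - f (Suc k)))^2) \<longlonglongrightarrow> 0"
    by (rule squeeze0[OF _ assms(1) assms(2) assms(3)]) simp
  then have "(\<lambda>k. f (Suc (Suc k)) - f (Suc k)) \<longlonglongrightarrow> 0" by (rule sq_to_zero)
  then show ?thesis using filterlim_sequentially_Suc[of "\<lambda>k. f (Suc k) - f k" "nhds 0"] by simp
qed

theorem corollary1:
  fixes X :: "real^'n^'m" and H :: "real^'n^'s" and Y :: "real^'n^'c"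
    and l1 l2 r1 r2 d1 d2 mu :: real
    and Om0 :: "real^'m^'r" and U0 :: "real^'n^'r" and Q0 :: "real^'r^'s"
    and W0 :: "real^'s^'c" and E10 :: "real^'n^'s" and E20 :: "real^'n^'c"
    and Z10 :: "real^'n^'s" and Z20 :: "real^'n^'c"
  assumes pos: "l1 > 0" "l2 > 0" "r1 > 0" "r2 > 0" "d1 > 0" "d2 > 0" "mu > 0"
    and mu_ge: "mu \<ge> sqrt 2 * max r1 r2"
  shows "\<exists>etaU0 etaQ0 etaW0 R. etaU0 > 0 \<and> etaQ0 > 0 \<and> etaW0 > 0 \<and> R > 0 \<and>
    (\<forall>etaU etaQ etaW
      (Om :: nat \<Rightarrow> real^'m^'r) (U :: nat \<Rightarrow> real^'n^'r) (Q :: nat \<Rightarrow> real^'r^'s)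
      (W :: nat \<Rightarrow> real^'s^'c) (E1 :: nat \<Rightarrow> real^'n^'s) (E2 :: nat \<Rightarrow> real^'n^'c)
      (Z1 :: nat \<Rightarrow> real^'n^'s) (Z2 :: nat \<Rightarrow> real^'n^'c).
      etaU > etaU0 \<and> etaQ > etaQ0 \<and> etaW > etaW0
      \<and> Om 0 = Om0 \<and> U 0 = U0 \<and> Q 0 = Q0 \<and> W 0 = W0
      \<and> E1 0 = E10 \<and> E2 0 = E20 \<and> Z1 0 = Z10 \<and> Z2 0 = Z20
      \<and> (\<forall>k. U (Suc k) = soft (l1 / (mu * etaU))
              (U k - (1 / (mu * etaU)) *\<^sub>R
                 grad (\<lambda>V. Ls X H Y l2 r1 r2 d1 d2 mu (Om k) V (Q k) (W k) (E1 k) (E2 k) (Z1 k) (Z2 k)) (U k)))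
      \<and> (\<forall>k. Q (Suc k) = Q k - (1 / (mu * etaQ)) *\<^sub>R
              grad (\<lambda>V. Lag X H Y l1 l2 r1 r2 d1 d2 mu (Om k) (U (Suc k)) V (W k) (E1 k) (E2 k) (Z1 k) (Z2 k)) (Q k))
      \<and> (\<forall>k. W (Suc k) = W k - (1 / (mu * etaW)) *\<^sub>R
              grad (\<lambda>V. Lag X H Y l1 l2 r1 r2 d1 d2 mu (Om k) (U (Suc k)) (Q (Suc k)) V (E1 k) (E2 k) (Z1 k) (Z2 k)) (W k))
      \<and> (\<forall>k V. Lag X H Y l1 l2 r1 r2 d1 d2 mu (Om (Suc k)) (U (Suc k)) (Q (Suc k)) (W (Suc k)) (E1 k) (E2 k) (Z1 k) (Z2 k)
              \<le> Lag X H Y l1 l2 r1 r2 d1 d2 mu V (U (Suc k)) (Q (Suc k)) (W (Suc k)) (E1 k) (E2 k) (Z1 k) (Z2 k))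
      \<and> (\<forall>k V. Lag X H Y l1 l2 r1 r2 d1 d2 mu (Om (Suc k)) (U (Suc k)) (Q (Suc k)) (W (Suc k)) (E1 (Suc k)) (E2 k) (Z1 k) (Z2 k)
              \<le> Lag X H Y l1 l2 r1 r2 d1 d2 mu (Om (Suc k)) (U (Suc k)) (Q (Suc k)) (W (Suc k)) V (E2 k) (Z1 k) (Z2 k))
      \<and> (\<forall>k V. Lag X H Y l1 l2 r1 r2 d1 d2 mu (Om (Suc k)) (U (Suc k)) (Q (Suc k)) (W (Suc k)) (E1 (Suc k)) (E2 (Suc k)) (Z1 k) (Z2 k)
              \<le> Lag X H Y l1 l2 r1 r2 d1 d2 mu (Om (Suc k)) (U (Suc k)) (Q (Suc k)) (W (Suc k)) (E1 (Suc k)) V (Z1 k) (Z2 k))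
      \<and> (\<forall>k. Z1 (Suc k) = Z1 k + mu *\<^sub>R (H - Q (Suc k) ** U (Suc k) - E1 (Suc k)))
      \<and> (\<forall>k. Z2 (Suc k) = Z2 k + mu *\<^sub>R (Y - W (Suc k) ** Q (Suc k) ** U (Suc k) - E2 (Suc k)))
      \<longrightarrow>
      (let Th = (\<lambda>k. (Om k, U k, Q k, W k, E1 k, E2 k, Z1 k, Z2 k));
           S = Sset X H Y l1 l2 r1 r2 d1 d2 mu R
       in (\<forall>k. thnorm (Th k) < R)
          \<and> (\<forall>(phi :: nat \<Rightarrow> nat) Ths. strict_mono phi \<and> (Th \<circ> phi) \<longlonglongrightarrow> Ths \<longrightarrow> Ths \<in> S)
          \<and> ((\<lambda>k. thdist (Th k) S) \<longlonglongrightarrow> 0)))"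
proof -
  have mu0: "mu > 0" and mu0': "mu \<ge> 0" using pos by auto
  have msq: "mu^2 \<ge> 2 * r1^2" "mu^2 \<ge> 2 * r2^2"
  proof -
    have s2: "(sqrt 2)^2 = 2" by simp
    have "sqrt 2 * r1 \<le> mu" "sqrt 2 * r2 \<le> mu" using mu_ge by (auto intro: order_trans[rotated] mult_left_mono)
    then have "(sqrt 2 * r1)^2 \<le> mu^2" "(sqrt 2 * r2)^2 \<le> mu^2" using pos by (auto intro!: power_mono)
    then show "mu^2 \<ge> 2 * r1^2" "mu^2 \<ge> 2 * r2^2" by (simp_all add: power_mult_distrib)
  qed
  have mgt: "r1 < mu" "r2 < mu"
  proof -
    show "r1 < mu"
    proof (rule ccontr)
      assume "\<not> r1 < mu" then have "mu \<le> r1" by simp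
      then have "mu * mu \<le> r1 * r1" using pos by (intro mult_mono) auto
      moreover have "0 < r1 * r1" using pos by simp
      moreover have "2 * (r1 * r1) \<le> mu * mu" using msq(1) by (simp add: power2_eq_square)
      ultimately show False by linarith
    qed
    show "r2 < mu"
    proof (rule ccontr)
      assume "\<not> r2 < mu" then have "mu \<le> r2" by simp
      then have "mu * mu \<le> r2 * r2" using pos by (intro mult_mono) auto
      moreover have "0 < r2 * r2" using pos by simp
      moreover have "2 * (r2 * r2) \<le> mu * mu" using msq(2) by (simp add: power2_eq_square)
      ultimately show False by linarith
    qed
  qed
  define L0 where "L0 = Lag X H Y l1 l2 r1 r2 d1 d2 mu Om0 U0 Q0 W0 E10 E20 Z10 Z20"
  define Lam0 where "Lam0 = L0 + ((norm Z10)^2 + (norm Z20)^2) / (2 * mu)"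
  define B1 where "B1 = L0 + (4*r1*Lam0 + 2*(norm Z10)^2 + 4*r2*Lam0 + 2*(norm Z20)^2)/mu"
  define k1 where "k1 = r1/2 - r1^2/(2*mu)"
  define k2 where "k2 = r2/2 - r2^2/(2*mu)"
  define AA where "AA = 1 + (r1^2/k1 + r2^2/k2)/(2*mu)"
  define LS where "LS = max Lam0 (AA * B1)"
  define cUb where "cUb = (1 + mu * (2*LS/d1) + mu * (2*LS/d2) * (2*LS/d1)) / 2"
  define cQb where "cQb = (d1 + mu * (LS/l1)^2 + mu * (2*LS/d2) * (LS/l1)^2) / 2"
  define cWb where "cWb = (d2 + mu * (2*LS/d1) * (LS/l1)^2) / 2"
  define Rb where "Rb = 1 + 2*LS/d1 + 2*LS/d2 + LS/l1 + 2*LS/l2 + 2*LS/r1 + 2*LS/r2 + r1*(1 + 2*LS/r1) + r2*(1 + 2*LS/r2)"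
  define T0 where "T0 = thnorm (Om0, U0, Q0, W0, E10, E20, Z10, Z20)"
  define R where "R = T0 + Rb + 1"
  have k1p: "k1 > 0"
  proof -
    have "r1^2/(2*mu) < r1/2" using mgt(1) pos by (simp add: field_simps power2_eq_square)
    then show ?thesis by (simp add: k1_def)
  qed
  have k2p: "k2 > 0"
  proof -
    have "r2^2/(2*mu) < r2/2" using mgt(2) pos by (simp add: field_simps power2_eq_square)
    then show ?thesis by (simp add: k2_def)
  qed
  have Lam0nn: "Lam0 \<ge> 0"
    using bounds(7)[OF pos, of X H Y Om0 U0 Q0 W0 E10 E20 Z10 Z20 Lam0] by (simp add: Lam0_def L0_def)
  have LSLam: "Lam0 \<le> LS" and LSB: "AA * B1 \<le> LS" by (simp_all add: LS_def)
  have LSnn: "LS \<ge> 0" using Lam0nn LSLam by simp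
  have cUbnn: "cUb \<ge> 0" unfolding cUb_def using LSnn pos by simp
  have cQbnn: "cQb \<ge> 0" unfolding cQb_def using LSnn pos by simp
  have cWbnn: "cWb \<ge> 0" unfolding cWb_def using LSnn pos by simp
  have Rbnn: "Rb \<ge> 0" unfolding Rb_def using LSnn pos by simp
  have T0nn: "T0 \<ge> 0" unfolding T0_def by (rule thnorm_nonneg)
  show ?thesis
    apply (rule exI[of _ "(cUb+1)/mu"], rule exI[of _ "(cQb+1)/mu"], rule exI[of _ "(cWb+1)/mu"], rule exI[of _ R])
    apply (intro conjI)
    subgoal using cUbnn mu0 by simp
    subgoal using cQbnn mu0 by simp
    subgoal using cWbnn mu0 by simp
    subgoal using T0nn Rbnn by (simp add: R_def)
    apply (intro allI impI)
    subgoal premises A for etaU etaQ etaW Om U Q W E1 E2 Z1 Z2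
    proof -
      have etaU: "etaU > (cUb+1)/mu" and etaQ: "etaQ > (cQb+1)/mu" and etaW: "etaW > (cWb+1)/mu"
        using A by blast+
      have i0: "Om 0 = Om0" "U 0 = U0" "Q 0 = Q0" "W 0 = W0" "E1 0 = E10" "E2 0 = E20" "Z1 0 = Z10" "Z2 0 = Z20"
        using A by blast+
      have hU: "\<And>k. U (Suc k) = soft (l1 / (mu * etaU))
              (U k - (1 / (mu * etaU)) *\<^sub>R
                 grad (\<lambda>V. Ls X H Y l2 r1 r2 d1 d2 mu (Om k) V (Q k) (W k) (E1 k) (E2 k) (Z1 k) (Z2 k)) (U k))"
        using A by blast
      have hQ: "\<And>k. Q (Suc k) = Q k - (1 / (mu * etaQ)) *\<^sub>R
              grad (\<lambda>V. Lag X H Y l1 l2 r1 r2 d1 d2 mu (Om k) (U (Suc k)) V (W k) (E1 k) (E2 k) (Z1 k) (Z2 k)) (Q k)"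
        using A by blast
      have hW: "\<And>k. W (Suc k) = W k - (1 / (mu * etaW)) *\<^sub>R
              grad (\<lambda>V. Lag X H Y l1 l2 r1 r2 d1 d2 mu (Om k) (U (Suc k)) (Q (Suc k)) V (E1 k) (E2 k) (Z1 k) (Z2 k)) (W k)"
        using A by blast
      have hOm: "\<And>k V. Lag X H Y l1 l2 r1 r2 d1 d2 mu (Om (Suc k)) (U (Suc k)) (Q (Suc k)) (W (Suc k)) (E1 k) (E2 k) (Z1 k) (Z2 k)
              \<le> Lag X H Y l1 l2 r1 r2 d1 d2 mu V (U (Suc k)) (Q (Suc k)) (W (Suc k)) (E1 k) (E2 k) (Z1 k) (Z2 k)"
        using A by blast
      have hE1: "\<And>k V. Lag X H Y l1 l2 r1 r2 d1 d2 mu (Om (Suc k)) (U (Suc k)) (Q (Suc k)) (W (Suc k)) (E1 (Suc k)) (E2 k) (Z1 k) (Z2 k)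
              \<le> Lag X H Y l1 l2 r1 r2 d1 d2 mu (Om (Suc k)) (U (Suc k)) (Q (Suc k)) (W (Suc k)) V (E2 k) (Z1 k) (Z2 k)"
        using A by blast
      have hE2: "\<And>k V. Lag X H Y l1 l2 r1 r2 d1 d2 mu (Om (Suc k)) (U (Suc k)) (Q (Suc k)) (W (Suc k)) (E1 (Suc k)) (E2 (Suc k)) (Z1 k) (Z2 k)
              \<le> Lag X H Y l1 l2 r1 r2 d1 d2 mu (Om (Suc k)) (U (Suc k)) (Q (Suc k)) (W (Suc k)) (E1 (Suc k)) V (Z1 k) (Z2 k)"
        using A by blast
      have hZ1: "\<And>k. Z1 (Suc k) = Z1 k + mu *\<^sub>R (H - Q (Suc k) ** U (Suc k) - E1 (Suc k))"
        using A by blast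
      have hZ2: "\<And>k. Z2 (Suc k) = Z2 k + mu *\<^sub>R (Y - W (Suc k) ** Q (Suc k) ** U (Suc k) - E2 (Suc k))"
        using A by blast
      define cu where "cu = mu * etaU"
      define cq where "cq = mu * etaQ"
      define cw where "cw = mu * etaW"
      have cu: "cu \<ge> cUb + 1" using etaU mu0 by (simp add: cu_def pos_divide_less_eq mult.commute)
      have cq: "cq \<ge> cQb + 1" using etaQ mu0 by (simp add: cq_def pos_divide_less_eq mult.commute)
      have cw: "cw \<ge> cWb + 1" using etaW mu0 by (simp add: cw_def pos_divide_less_eq mult.commute)
      have cu0: "cu > 0" using cu cUbnn by simp
      have cq0: "cq > 0" using cq cQbnn by simp
      have cw0: "cw > 0" using cw cWbnn by simp
      have Ustep: "U (Suc k) = soft (l1 / cu) (U k - (1 / cu) *\<^sub>R GU X H Y mu (Om k) (U k) (Q k) (W k) (E1 k) (E2 k) (Z1 k) (Z2 k))" for k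
        using hU[of k] unfolding grad_U[OF mu0'] cu_def .
      have Qstep: "Q (Suc k) = Q k - (1 / cq) *\<^sub>R GQ X H Y d1 mu (Om k) (U (Suc k)) (Q k) (W k) (E1 k) (E2 k) (Z1 k) (Z2 k)" for k
        using hQ[of k] unfolding grad_Q[OF mu0' less_imp_le[OF pos(5)]] cq_def .
      have Wstep: "W (Suc k) = W k - (1 / cw) *\<^sub>R GW X H Y d2 mu (Om k) (U (Suc k)) (Q (Suc k)) (W k) (E1 k) (E2 k) (Z1 k) (Z2 k)" for k
        using hW[of k] unfolding grad_W[OF mu0' less_imp_le[OF pos(6)]] cw_def .
      define LL where "LL k = Lag X H Y l1 l2 r1 r2 d1 d2 mu (Om k) (U k) (Q k) (W k) (E1 k) (E2 k) (Z1 k) (Z2 k)" for k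
      define Zt where "Zt k = ((norm (Z1 k))^2 + (norm (Z2 k))^2) / (2 * mu)" for k
      define EL where "EL k = Lag X H Y l1 l2 r1 r2 d1 d2 mu (Om (Suc k)) (U (Suc k)) (Q (Suc k)) (W (Suc k)) (E1 (Suc k)) (E2 (Suc k)) (Z1 k) (Z2 k)" for k
      define dec where "dec k = (norm (U (Suc k) - U k))^2 + (norm (Q (Suc k) - Q k))^2 + (norm (W (Suc k) - W k))^2
          + (l2/2) * (norm (Om k - Om (Suc k)))^2 + ((r1+mu)/2) * (norm (E1 k - E1 (Suc k)))^2 + ((r2+mu)/2) * (norm (E2 k - E2 (Suc k)))^2" for k
      have step: "EL k + dec k \<le> LL k" if b: "LL k + Zt k \<le> LS" for k
        unfolding EL_def dec_def LL_def
        apply (rule one_step(1)[OF pos _ _ _ _ Ustep Qstep Wstep hOm hE1 hE2])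
        using b cu cq cw by (simp_all add: LL_def Zt_def cUb_def cQb_def cWb_def)
      have decnn: "dec k \<ge> 0" for k unfolding dec_def using pos by simp
      have GOm0: "GOm X l2 (Om (Suc k)) (U (Suc k)) = 0" for k using Om_min(1)[OF hOm] pos by simp
      have Ge10: "Ge1 H r1 mu (U (Suc k)) (Q (Suc k)) (E1 (Suc k)) (Z1 k) = 0" for k by (rule e1_min(1)[OF hE1])
      have Ge20: "Ge2 Y r2 mu (U (Suc k)) (Q (Suc k)) (W (Suc k)) (E2 (Suc k)) (Z2 k) = 0" for k by (rule e2_min(1)[OF hE2])
      have Zr1: "Z1 (Suc k) = r1 *\<^sub>R E1 (Suc k)" for k
      proof -
        have "r1 *\<^sub>R E1 (Suc k) - Z1 k - mu *\<^sub>R (H - Q (Suc k) ** U (Suc k) - E1 (Suc k)) = 0"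
          using Ge10[of k] by (simp add: Ge1_def)
        then show ?thesis unfolding hZ1[of k] by (simp add: algebra_simps)
      qed
      have Zr2: "Z2 (Suc k) = r2 *\<^sub>R E2 (Suc k)" for k
      proof -
        have "r2 *\<^sub>R E2 (Suc k) - Z2 k - mu *\<^sub>R (Y - W (Suc k) ** Q (Suc k) ** U (Suc k) - E2 (Suc k)) = 0"
          using Ge20[of k] by (simp add: Ge2_def)
        then show ?thesis unfolding hZ2[of k] by (simp add: algebra_simps)
      qed
      have LLZ: "LL (Suc k) = EL k + ((norm (Z1 (Suc k) - Z1 k))^2 + (norm (Z2 (Suc k) - Z2 k))^2) / mu" for k
        unfolding LL_def EL_def by (rule Z_step[OF mu0 hZ1 hZ2])
      have b0: "LL 0 + Zt 0 = Lam0" by (simp add: LL_def Zt_def Lam0_def L0_def i0)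
      have LL0: "LL 0 = L0" by (simp add: LL_def L0_def i0)
      have LL1: "LL (Suc 0) \<le> B1"
      proof -
        have s0: "EL 0 + dec 0 \<le> LL 0" using step[of 0] b0 LSLam by simp
        have bEL: "EL 0 + Zt 0 \<le> Lam0" using s0 decnn[of 0] b0 by linarith
        note BE = bounds[OF pos, of X H Y "Om (Suc 0)" "U (Suc 0)" "Q (Suc 0)" "W (Suc 0)" "E1 (Suc 0)" "E2 (Suc 0)" "Z1 0" "Z2 0" Lam0]
        have e1b: "(norm (E1 (Suc 0)))^2 \<le> 2 * Lam0 / r1" using BE(5) bEL by (simp add: EL_def Zt_def)
        have e2b: "(norm (E2 (Suc 0)))^2 \<le> 2 * Lam0 / r2" using BE(6) bEL by (simp add: EL_def Zt_def)
        have z1: "(norm (Z1 (Suc 0) - Z1 0))^2 \<le> 4*r1*Lam0 + 2*(norm Z10)^2"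
        proof -
          have a: "(norm (Z1 (Suc 0) - Z1 0))^2 \<le> 2*(norm (Z1 (Suc 0)))^2 + 2*(norm (Z1 0))^2" by (rule norm_diff_sq_le)
          have b: "(norm (Z1 (Suc 0)))^2 = r1^2 * (norm (E1 (Suc 0)))^2" using pos by (simp add: Zr1 power_mult_distrib)
          have c: "r1^2 * (norm (E1 (Suc 0)))^2 \<le> r1^2 * (2 * Lam0 / r1)" by (rule mult_left_mono[OF e1b zero_le_power2])
          have d: "r1^2 * (2 * Lam0 / r1) = 2 * r1 * Lam0" using pos by (simp add: power2_eq_square)
          show ?thesis using a b c d i0 by simp
        qed
        have z2: "(norm (Z2 (Suc 0) - Z2 0))^2 \<le> 4*r2*Lam0 + 2*(norm Z20)^2"
        proof -
          have a: "(norm (Z2 (Suc 0) - Z2 0))^2 \<le> 2*(norm (Z2 (Suc 0)))^2 + 2*(norm (Z2 0))^2" by (rule norm_diff_sq_le)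
          have b: "(norm (Z2 (Suc 0)))^2 = r2^2 * (norm (E2 (Suc 0)))^2" using pos by (simp add: Zr2 power_mult_distrib)
          have c: "r2^2 * (norm (E2 (Suc 0)))^2 \<le> r2^2 * (2 * Lam0 / r2)" by (rule mult_left_mono[OF e2b zero_le_power2])
          have d: "r2^2 * (2 * Lam0 / r2) = 2 * r2 * Lam0" using pos by (simp add: power2_eq_square)
          show ?thesis using a b c d i0 by simp
        qed
        have "((norm (Z1 (Suc 0) - Z1 0))^2 + (norm (Z2 (Suc 0) - Z2 0))^2) / mu
           \<le> (4*r1*Lam0 + 2*(norm Z10)^2 + 4*r2*Lam0 + 2*(norm Z20)^2) / mu"
          using z1 z2 mu0 by (intro divide_right_mono) auto
        moreover have "EL 0 \<le> L0" using s0 decnn[of 0] LL0 by linarith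
        ultimately show ?thesis unfolding LLZ[of 0] B1_def by linarith
      qed
      define kk1 where "kk1 = (r1+mu)/2 - r1^2/mu"
      define kk2 where "kk2 = (r2+mu)/2 - r2^2/mu"
      have kk1p: "kk1 > 0"
      proof -
        have "r1^2/mu \<le> mu/2" using msq(1) mu0 by (simp add: field_simps power2_eq_square)
        then show ?thesis unfolding kk1_def using pos by simp
      qed
      have kk2p: "kk2 > 0"
      proof -
        have "r2^2/mu \<le> mu/2" using msq(2) mu0 by (simp add: field_simps power2_eq_square)
        then show ?thesis unfolding kk2_def using pos by simp
      qed
      define dec2 where "dec2 j = (norm (U (Suc j) - U j))^2 + (norm (Q (Suc j) - Q j))^2 + (norm (W (Suc j) - W j))^2
          + (l2/2) * (norm (Om j - Om (Suc j)))^2 + kk1 * (norm (E1 j - E1 (Suc j)))^2 + kk2 * (norm (E2 j - E2 (Suc j)))^2" for j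
      have dec2nn: "dec2 j \<ge> 0" for j unfolding dec2_def using pos kk1p kk2p by simp
      have desc: "LL (Suc (Suc k)) + dec2 (Suc k) \<le> LL (Suc k)" if b: "LL (Suc k) + Zt (Suc k) \<le> LS" for k
      proof -
        have s: "EL (Suc k) + dec (Suc k) \<le> LL (Suc k)" by (rule step[OF b])
        have n1: "(norm (Z1 (Suc (Suc k)) - Z1 (Suc k)))^2 = r1^2 * (norm (E1 (Suc k) - E1 (Suc (Suc k))))^2"
        proof -
          have "Z1 (Suc (Suc k)) - Z1 (Suc k) = r1 *\<^sub>R (E1 (Suc (Suc k)) - E1 (Suc k))" by (simp add: Zr1 algebra_simps)
          then show ?thesis using pos by (simp add: power_mult_distrib norm_minus_commute)
        qed
        have n2: "(norm (Z2 (Suc (Suc k)) - Z2 (Suc k)))^2 = r2^2 * (norm (E2 (Suc k) - E2 (Suc (Suc k))))^2"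
        proof -
          have "Z2 (Suc (Suc k)) - Z2 (Suc k) = r2 *\<^sub>R (E2 (Suc (Suc k)) - E2 (Suc k))" by (simp add: Zr2 algebra_simps)
          then show ?thesis using pos by (simp add: power_mult_distrib norm_minus_commute)
        qed
        have "((norm (Z1 (Suc (Suc k)) - Z1 (Suc k)))^2 + (norm (Z2 (Suc (Suc k)) - Z2 (Suc k)))^2) / mu
            = r1^2/mu * (norm (E1 (Suc k) - E1 (Suc (Suc k))))^2 + r2^2/mu * (norm (E2 (Suc k) - E2 (Suc (Suc k))))^2"
          unfolding n1 n2 by (simp add: add_divide_distrib)
        moreover have "dec (Suc k) = dec2 (Suc k) + r1^2/mu * (norm (E1 (Suc k) - E1 (Suc (Suc k))))^2
            + r2^2/mu * (norm (E2 (Suc k) - E2 (Suc (Suc k))))^2"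
          unfolding dec_def dec2_def kk1_def kk2_def by (simp add: algebra_simps)
        ultimately show ?thesis using s unfolding LLZ[of "Suc k"] by linarith
      qed
      have zb: "LL (Suc k) + Zt (Suc k) \<le> LS" and LLnn: "LL (Suc k) \<ge> 0" if b: "LL (Suc k) \<le> B1" for k
      proof -
        have a: "k1 * (norm (E1 (Suc k)))^2 + k2 * (norm (E2 (Suc k)))^2 \<le> LL (Suc k)"
          unfolding k1_def k2_def LL_def by (rule coerc_eq(1)[OF pos Zr1 Zr2])
        have z: "Zt (Suc k) = r1^2/(2*mu) * (norm (E1 (Suc k)))^2 + r2^2/(2*mu) * (norm (E2 (Suc k)))^2"
          unfolding Zt_def by (rule coerc_eq(2)[OF pos Zr1 Zr2])
        note zz = zt_bound[OF k1p k2p mu0 zero_le_power2 zero_le_power2 a z b]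
        show "LL (Suc k) + Zt (Suc k) \<le> LS" using zz(1) LSB unfolding AA_def by linarith
        show "LL (Suc k) \<ge> 0" by (rule zz(2))
      qed
      have ind: "LL (Suc k) \<le> B1" for k
      proof (induction k)
        case 0 then show ?case by (rule LL1)
      next
        case (Suc k)
        have "LL (Suc (Suc k)) + dec2 (Suc k) \<le> LL (Suc k)" by (rule desc[OF zb[OF Suc]])
        then show ?case using Suc dec2nn[of "Suc k"] by linarith
      qed
      have bnd: "LL k + Zt k \<le> LS" for k
      proof (cases k)
        case 0 then show ?thesis using b0 LSLam by simp
      next
        case (Suc j) then show ?thesis using zb[OF ind[of j]] by simp
      qed
      have dsc: "LL (Suc (Suc k)) + dec2 (Suc k) \<le> LL (Suc k)" for k by (rule desc[OF bnd])
      define Th where "Th = (\<lambda>k. (Om k, U k, Q k, W k, E1 k, E2 k, Z1 k, Z2 k))"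
      have thb: "thnorm (Th k) \<le> T0 + Rb" for k
      proof (cases k)
        case 0 then show ?thesis using Rbnn by (simp add: Th_def T0_def i0)
      next
        case (Suc j)
        note Bk = bounds[OF pos bnd[of k, unfolded LL_def Zt_def]]
        have nn: "2*LS/d1 \<ge> 0" "2*LS/d2 \<ge> 0" "LS/l1 \<ge> 0" "2*LS/l2 \<ge> 0" "2*LS/r1 \<ge> 0" "2*LS/r2 \<ge> 0"
          "r1*(1 + 2*LS/r1) \<ge> 0" "r2*(1 + 2*LS/r2) \<ge> 0" using LSnn pos by simp_all
        have c1: "norm (Om k) \<le> Rb" using norm_le_sq[OF Bk(4)] nn unfolding Rb_def by linarith
        have c2: "norm (U k) \<le> Rb" using Bk(3) nn unfolding Rb_def by linarith
        have c3: "norm (Q k) \<le> Rb" using norm_le_sq[OF Bk(1)] nn unfolding Rb_def by linarith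
        have c4: "norm (W k) \<le> Rb" using norm_le_sq[OF Bk(2)] nn unfolding Rb_def by linarith
        have c5: "norm (E1 k) \<le> Rb" using norm_le_sq[OF Bk(5)] nn unfolding Rb_def by linarith
        have c6: "norm (E2 k) \<le> Rb" using norm_le_sq[OF Bk(6)] nn unfolding Rb_def by linarith
        have "norm (Z1 k) = r1 * norm (E1 k)" using pos by (simp add: Suc Zr1)
        also have "\<dots> \<le> r1 * (1 + 2*LS/r1)" using norm_le_sq[OF Bk(5)] pos by (intro mult_left_mono) auto
        finally have c7: "norm (Z1 k) \<le> Rb" using nn unfolding Rb_def by linarith
        have "norm (Z2 k) = r2 * norm (E2 k)" using pos by (simp add: Suc Zr2)
        also have "\<dots> \<le> r2 * (1 + 2*LS/r2)" using norm_le_sq[OF Bk(6)] pos by (intro mult_left_mono) auto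
        finally have c8: "norm (Z2 k) \<le> Rb" using nn unfolding Rb_def by linarith
        have "thnorm (Th k) \<le> Rb" unfolding Th_def thnorm_tuple max.bounded_iff using c1 c2 c3 c4 c5 c6 c7 c8 by blast
        then show ?thesis using T0nn by simp
      qed
      have LLdec: "decseq (\<lambda>k. LL (Suc k))"
        by (rule decseq_SucI) (use dsc dec2nn in smt)
      have LLlb: "\<forall>i. 0 \<le> LL (Suc i)" using LLnn ind by blast
      obtain ell where ell: "(\<lambda>k. LL (Suc k)) \<longlonglongrightarrow> ell" using decseq_convergent[OF LLdec LLlb] by blast
      have dlim: "(\<lambda>k. LL (Suc k) - LL (Suc (Suc k))) \<longlonglongrightarrow> 0"
        using tendsto_diff[OF ell LIMSEQ_Suc[OF ell]] by simp
      have dd: "dec2 (Suc k) \<le> LL (Suc k) - LL (Suc (Suc k))" for k using dsc[of k] by simp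
      have tnn: "0 \<le> (norm (U (Suc j) - U j))^2" "0 \<le> (norm (Q (Suc j) - Q j))^2" "0 \<le> (norm (W (Suc j) - W j))^2"
        "0 \<le> (l2/2) * (norm (Om (Suc j) - Om j))^2" "0 \<le> kk1 * (norm (E1 (Suc j) - E1 j))^2"
        "0 \<le> kk2 * (norm (E2 (Suc j) - E2 j))^2" for j using pos kk1p kk2p by auto
      have dparts: "(norm (U (Suc j) - U j))^2 \<le> dec2 j" "(norm (Q (Suc j) - Q j))^2 \<le> dec2 j"
        "(norm (W (Suc j) - W j))^2 \<le> dec2 j" "(l2/2) * (norm (Om (Suc j) - Om j))^2 \<le> dec2 j"
        "kk1 * (norm (E1 (Suc j) - E1 j))^2 \<le> dec2 j" "kk2 * (norm (E2 (Suc j) - E2 j))^2 \<le> dec2 j" for j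
        unfolding dec2_def norm_minus_commute[of "Om j"] norm_minus_commute[of "E1 j"] norm_minus_commute[of "E2 j"]
        using tnn[of j] by linarith+
      have dU: "(\<lambda>k. U (Suc k) - U k) \<longlonglongrightarrow> 0"
      proof (rule conv_from_dec[of "1" _ "\<lambda>k. LL (Suc k) - LL (Suc (Suc k))"])
        fix k show "(1) * (norm (U (Suc (Suc k)) - U (Suc k)))^2 \<le> LL (Suc k) - LL (Suc (Suc k))"
          using dparts(1)[of "Suc k"] dd[of k] by simp
      qed (use pos kk1p kk2p dlim in auto)
      have dQ: "(\<lambda>k. Q (Suc k) - Q k) \<longlonglongrightarrow> 0"
      proof (rule conv_from_dec[of "1" _ "\<lambda>k. LL (Suc k) - LL (Suc (Suc k))"])
        fix k show "(1) * (norm (Q (Suc (Suc k)) - Q (Suc k)))^2 \<le> LL (Suc k) - LL (Suc (Suc k))"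
          using dparts(2)[of "Suc k"] dd[of k] by simp
      qed (use pos kk1p kk2p dlim in auto)
      have dW: "(\<lambda>k. W (Suc k) - W k) \<longlonglongrightarrow> 0"
      proof (rule conv_from_dec[of "1" _ "\<lambda>k. LL (Suc k) - LL (Suc (Suc k))"])
        fix k show "(1) * (norm (W (Suc (Suc k)) - W (Suc k)))^2 \<le> LL (Suc k) - LL (Suc (Suc k))"
          using dparts(3)[of "Suc k"] dd[of k] by simp
      qed (use pos kk1p kk2p dlim in auto)
      have dOm: "(\<lambda>k. Om (Suc k) - Om k) \<longlonglongrightarrow> 0"
      proof (rule conv_from_dec[of "l2/2" _ "\<lambda>k. LL (Suc k) - LL (Suc (Suc k))"])
        fix k show "(l2/2) * (norm (Om (Suc (Suc k)) - Om (Suc k)))^2 \<le> LL (Suc k) - LL (Suc (Suc k))"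
          using dparts(4)[of "Suc k"] dd[of k] by simp
      qed (use pos kk1p kk2p dlim in auto)
      have dE1: "(\<lambda>k. E1 (Suc k) - E1 k) \<longlonglongrightarrow> 0"
      proof (rule conv_from_dec[of "kk1" _ "\<lambda>k. LL (Suc k) - LL (Suc (Suc k))"])
        fix k show "(kk1) * (norm (E1 (Suc (Suc k)) - E1 (Suc k)))^2 \<le> LL (Suc k) - LL (Suc (Suc k))"
          using dparts(5)[of "Suc k"] dd[of k] by simp
      qed (use pos kk1p kk2p dlim in auto)
      have dE2: "(\<lambda>k. E2 (Suc k) - E2 k) \<longlonglongrightarrow> 0"
      proof (rule conv_from_dec[of "kk2" _ "\<lambda>k. LL (Suc k) - LL (Suc (Suc k))"])
        fix k show "(kk2) * (norm (E2 (Suc (Suc k)) - E2 (Suc k)))^2 \<le> LL (Suc k) - LL (Suc (Suc k))"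
          using dparts(6)[of "Suc k"] dd[of k] by simp
      qed (use pos kk1p kk2p dlim in auto)
      have dZ1: "(\<lambda>k. Z1 (Suc k) - Z1 k) \<longlonglongrightarrow> 0"
      proof -
        have "(\<lambda>k. r1 *\<^sub>R (E1 (Suc (Suc k)) - E1 (Suc k))) \<longlonglongrightarrow> r1 *\<^sub>R 0"
          by (intro tendsto_intros LIMSEQ_Suc[OF dE1, simplified])
        then have "(\<lambda>k. Z1 (Suc (Suc k)) - Z1 (Suc k)) \<longlonglongrightarrow> 0" by (simp add: Zr1 algebra_simps)
        then show ?thesis using filterlim_sequentially_Suc[of "\<lambda>k. Z1 (Suc k) - Z1 k" "nhds 0"] by simp
      qed
      have dZ2: "(\<lambda>k. Z2 (Suc k) - Z2 k) \<longlonglongrightarrow> 0"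
      proof -
        have "(\<lambda>k. r2 *\<^sub>R (E2 (Suc (Suc k)) - E2 (Suc k))) \<longlonglongrightarrow> r2 *\<^sub>R 0"
          by (intro tendsto_intros LIMSEQ_Suc[OF dE2, simplified])
        then have "(\<lambda>k. Z2 (Suc (Suc k)) - Z2 (Suc k)) \<longlonglongrightarrow> 0" by (simp add: Zr2 algebra_simps)
        then show ?thesis using filterlim_sequentially_Suc[of "\<lambda>k. Z2 (Suc k) - Z2 k" "nhds 0"] by simp
      qed
      define S :: "('m,'n,'r,'s,'c) theta set" where "S = Sset X H Y l1 l2 r1 r2 d1 d2 mu R"
      have limS: "Ths \<in> S" if sm: "strict_mono phi" and lim: "(Th \<circ> phi) \<longlonglongrightarrow> Ths" for phi Ths
      proof -
        define Oms where "Oms = fst Ths"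
        define Us where "Us = fst (snd Ths)"
        define Qs where "Qs = fst (snd (snd Ths))"
        define Ws where "Ws = fst (snd (snd (snd Ths)))"
        define e1s where "e1s = fst (snd (snd (snd (snd Ths))))"
        define e2s where "e2s = fst (snd (snd (snd (snd (snd Ths)))))"
        define Z1s where "Z1s = fst (snd (snd (snd (snd (snd (snd Ths))))))"
        define Z2s where "Z2s = snd (snd (snd (snd (snd (snd (snd Ths))))))"
        have Ths: "Ths = (Oms, Us, Qs, Ws, e1s, e2s, Z1s, Z2s)"
          unfolding Oms_def Us_def Qs_def Ws_def e1s_def e2s_def Z1s_def Z2s_def by simp
        have l: "(\<lambda>j. (Om (phi j), U (phi j), Q (phi j), W (phi j), E1 (phi j), E2 (phi j), Z1 (phi j), Z2 (phi j)))
            \<longlonglongrightarrow> (Oms, Us, Qs, Ws, e1s, e2s, Z1s, Z2s)"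
          using lim unfolding Th_def Ths o_def .
        have lOm: "(\<lambda>j. Om (phi j)) \<longlonglongrightarrow> Oms" using tendsto_fst[OF l] by simp
        have lU: "(\<lambda>j. U (phi j)) \<longlonglongrightarrow> Us" using tendsto_fst[OF tendsto_snd[OF l]] by simp
        have lQ: "(\<lambda>j. Q (phi j)) \<longlonglongrightarrow> Qs" using tendsto_fst[OF tendsto_snd[OF tendsto_snd[OF l]]] by simp
        have lW: "(\<lambda>j. W (phi j)) \<longlonglongrightarrow> Ws" using tendsto_fst[OF tendsto_snd[OF tendsto_snd[OF tendsto_snd[OF l]]]] by simp
        have lE1: "(\<lambda>j. E1 (phi j)) \<longlonglongrightarrow> e1s"
          using tendsto_fst[OF tendsto_snd[OF tendsto_snd[OF tendsto_snd[OF tendsto_snd[OF l]]]]] by simp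
        have lE2: "(\<lambda>j. E2 (phi j)) \<longlonglongrightarrow> e2s"
          using tendsto_fst[OF tendsto_snd[OF tendsto_snd[OF tendsto_snd[OF tendsto_snd[OF tendsto_snd[OF l]]]]]] by simp
        have lZ1: "(\<lambda>j. Z1 (phi j)) \<longlonglongrightarrow> Z1s"
          using tendsto_fst[OF tendsto_snd[OF tendsto_snd[OF tendsto_snd[OF tendsto_snd[OF tendsto_snd[OF tendsto_snd[OF l]]]]]]] by simp
        have lZ2: "(\<lambda>j. Z2 (phi j)) \<longlonglongrightarrow> Z2s"
          using tendsto_snd[OF tendsto_snd[OF tendsto_snd[OF tendsto_snd[OF tendsto_snd[OF tendsto_snd[OF tendsto_snd[OF l]]]]]]] by simp
        have lOm': "(\<lambda>j. Om (Suc (phi j))) \<longlonglongrightarrow> Oms" by (rule shift_lim[OF lOm dOm sm])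
        have lU': "(\<lambda>j. U (Suc (phi j))) \<longlonglongrightarrow> Us" by (rule shift_lim[OF lU dU sm])
        have lQ': "(\<lambda>j. Q (Suc (phi j))) \<longlonglongrightarrow> Qs" by (rule shift_lim[OF lQ dQ sm])
        have lW': "(\<lambda>j. W (Suc (phi j))) \<longlonglongrightarrow> Ws" by (rule shift_lim[OF lW dW sm])
        have lE1': "(\<lambda>j. E1 (Suc (phi j))) \<longlonglongrightarrow> e1s" by (rule shift_lim[OF lE1 dE1 sm])
        have lE2': "(\<lambda>j. E2 (Suc (phi j))) \<longlonglongrightarrow> e2s" by (rule shift_lim[OF lE2 dE2 sm])
        have sub0: "(\<lambda>j. f (Suc (phi j)) - f (phi j)) \<longlonglongrightarrow> 0" if "(\<lambda>k. f (Suc k) - f k) \<longlonglongrightarrow> 0"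
          for f :: "nat \<Rightarrow> real^'n^'s"
          using LIMSEQ_subseq_LIMSEQ[OF that sm] by (simp add: o_def)
        have gOm: "GOm X l2 Oms Us = 0" by (rule lim_zero[OF tendsto_GOm[OF lOm' lU']], rule GOm0)
        have gE1: "Ge1 H r1 mu Us Qs e1s Z1s = 0" by (rule lim_zero[OF tendsto_Ge1[OF lU' lQ' lE1' lZ1]], rule Ge10)
        have gE2: "Ge2 Y r2 mu Us Qs Ws e2s Z2s = 0" by (rule lim_zero[OF tendsto_Ge2[OF lU' lQ' lW' lE2' lZ2]], rule Ge20)
        have gQ: "GQ X H Y d1 mu Oms Us Qs Ws e1s e2s Z1s Z2s = 0"
        proof -
          have eq: "GQ X H Y d1 mu (Om k) (U (Suc k)) (Q k) (W k) (E1 k) (E2 k) (Z1 k) (Z2 k) = - cq *\<^sub>R (Q (Suc k) - Q k)" for k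
            using cq0 by (simp add: Qstep[of k])
          have t1: "(\<lambda>j. GQ X H Y d1 mu (Om (phi j)) (U (Suc (phi j))) (Q (phi j)) (W (phi j)) (E1 (phi j)) (E2 (phi j)) (Z1 (phi j)) (Z2 (phi j)))
              \<longlonglongrightarrow> GQ X H Y d1 mu Oms Us Qs Ws e1s e2s Z1s Z2s"
            by (rule tendsto_GQ[OF lU' lQ lW lE1 lE2 lZ1 lZ2])
          have "(\<lambda>j. - cq *\<^sub>R (Q (Suc (phi j)) - Q (phi j))) \<longlonglongrightarrow> - cq *\<^sub>R 0"
            using LIMSEQ_subseq_LIMSEQ[OF dQ sm] by (intro tendsto_intros) (simp add: o_def)
          then have t2: "(\<lambda>j. GQ X H Y d1 mu (Om (phi j)) (U (Suc (phi j))) (Q (phi j)) (W (phi j)) (E1 (phi j)) (E2 (phi j)) (Z1 (phi j)) (Z2 (phi j)))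
              \<longlonglongrightarrow> 0" unfolding eq by simp
          show ?thesis using LIMSEQ_unique[OF t1 t2] .
        qed
        have gW: "GW X H Y d2 mu Oms Us Qs Ws e1s e2s Z1s Z2s = 0"
        proof -
          have eq: "GW X H Y d2 mu (Om k) (U (Suc k)) (Q (Suc k)) (W k) (E1 k) (E2 k) (Z1 k) (Z2 k) = - cw *\<^sub>R (W (Suc k) - W k)" for k
            using cw0 by (simp add: Wstep[of k])
          have t1: "(\<lambda>j. GW X H Y d2 mu (Om (phi j)) (U (Suc (phi j))) (Q (Suc (phi j))) (W (phi j)) (E1 (phi j)) (E2 (phi j)) (Z1 (phi j)) (Z2 (phi j)))
              \<longlonglongrightarrow> GW X H Y d2 mu Oms Us Qs Ws e1s e2s Z1s Z2s"
            by (rule tendsto_GW[OF lU' lQ' lW lE2 lZ2])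
          have "(\<lambda>j. - cw *\<^sub>R (W (Suc (phi j)) - W (phi j))) \<longlonglongrightarrow> - cw *\<^sub>R 0"
            using LIMSEQ_subseq_LIMSEQ[OF dW sm] by (intro tendsto_intros) (simp add: o_def)
          then have t2: "(\<lambda>j. GW X H Y d2 mu (Om (phi j)) (U (Suc (phi j))) (Q (Suc (phi j))) (W (phi j)) (E1 (phi j)) (E2 (phi j)) (Z1 (phi j)) (Z2 (phi j)))
              \<longlonglongrightarrow> 0" unfolding eq by simp
          show ?thesis using LIMSEQ_unique[OF t1 t2] .
        qed
        have gR1: "H - Qs ** Us - e1s = 0"
        proof -
          have t1: "(\<lambda>j. mu *\<^sub>R (H - Q (Suc (phi j)) ** U (Suc (phi j)) - E1 (Suc (phi j)))) \<longlonglongrightarrow> mu *\<^sub>R (H - Qs ** Us - e1s)"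
            by (intro tendsto_intros lQ' lU' lE1')
          have "(\<lambda>j. Z1 (Suc (phi j)) - Z1 (phi j)) \<longlonglongrightarrow> 0" using LIMSEQ_subseq_LIMSEQ[OF dZ1 sm] by (simp add: o_def)
          then have t2: "(\<lambda>j. mu *\<^sub>R (H - Q (Suc (phi j)) ** U (Suc (phi j)) - E1 (Suc (phi j)))) \<longlonglongrightarrow> 0"
            by (simp add: hZ1)
          have "mu *\<^sub>R (H - Qs ** Us - e1s) = 0" using LIMSEQ_unique[OF t1 t2] .
          then show ?thesis using mu0 by simp
        qed
        have gR2: "Y - Ws ** Qs ** Us - e2s = 0"
        proof -
          have t1: "(\<lambda>j. mu *\<^sub>R (Y - W (Suc (phi j)) ** Q (Suc (phi j)) ** U (Suc (phi j)) - E2 (Suc (phi j)))) \<longlonglongrightarrow> mu *\<^sub>R (Y - Ws ** Qs ** Us - e2s)"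
            by (intro tendsto_intros lW' lQ' lU' lE2')
          have "(\<lambda>j. Z2 (Suc (phi j)) - Z2 (phi j)) \<longlonglongrightarrow> 0" using LIMSEQ_subseq_LIMSEQ[OF dZ2 sm] by (simp add: o_def)
          then have t2: "(\<lambda>j. mu *\<^sub>R (Y - W (Suc (phi j)) ** Q (Suc (phi j)) ** U (Suc (phi j)) - E2 (Suc (phi j)))) \<longlonglongrightarrow> 0"
            by (simp add: hZ2)
          have "mu *\<^sub>R (Y - Ws ** Qs ** Us - e2s) = 0" using LIMSEQ_unique[OF t1 t2] .
          then show ?thesis using mu0 by simp
        qed
        define GUs where "GUs = GU X H Y mu Oms Us Qs Ws e1s e2s Z1s Z2s"
        have prox: "l1 * l1norm Us + inner (- GUs) (V - Us) \<le> l1 * l1norm V" for V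
        proof -
          have p: "l1 * l1norm (U (Suc k)) + inner (- GU X H Y mu (Om k) (U k) (Q k) (W k) (E1 k) (E2 k) (Z1 k) (Z2 k)
                - cu *\<^sub>R (U (Suc k) - U k)) (V - U (Suc k)) \<le> l1 * l1norm V" for k
            by (rule prox_step[OF cu0 _ Ustep]) (use pos in simp)
          have dUs: "(\<lambda>j. U (Suc (phi j)) - U (phi j)) \<longlonglongrightarrow> 0" using LIMSEQ_subseq_LIMSEQ[OF dU sm] by (simp add: o_def)
          have t: "(\<lambda>j. l1 * l1norm (U (Suc (phi j))) + inner (- GU X H Y mu (Om (phi j)) (U (phi j)) (Q (phi j)) (W (phi j)) (E1 (phi j)) (E2 (phi j)) (Z1 (phi j)) (Z2 (phi j))
                - cu *\<^sub>R (U (Suc (phi j)) - U (phi j))) (V - U (Suc (phi j))))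
              \<longlonglongrightarrow> l1 * l1norm Us + inner (- GUs - cu *\<^sub>R 0) (V - Us)"
            unfolding GUs_def by (intro tendsto_intros tendsto_GU lOm lU lQ lW lE1 lE2 lZ1 lZ2 lU' dUs)
          have "l1 * l1norm Us + inner (- GUs - cu *\<^sub>R 0) (V - Us) \<le> l1 * l1norm V"
            by (rule LIMSEQ_le_const2[OF t]) (use p in blast)
          then show ?thesis by simp
        qed
        have gr: "grad (Ls_th X H Y l2 r1 r2 d1 d2 mu) Ths = (0, GUs, 0, 0, 0, 0, 0, 0)"
          unfolding grad_eqI[OF Ls_th_gderiv] Gth_def Ths GUs_def
          using gOm gQ gW gE1 gE2 gR1 gR2 by simp
        have tn: "thnorm Ths < R"
        proof -
          have "(\<lambda>j. thnorm (Th (phi j))) \<longlonglongrightarrow> thnorm Ths" using tendsto_thnorm[OF lim] by (simp add: o_def)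
          then have "thnorm Ths \<le> T0 + Rb" by (rule LIMSEQ_le_const2) (use thb in blast)
          then show ?thesis unfolding R_def by simp
        qed
        have sd: "(0, - (1/l1) *\<^sub>R GUs, 0, 0, 0, 0, 0, 0) \<in> subdiff (\<lambda>T. l1norm (fst (snd T))) Ths"
          unfolding subdiff_def
        proof (intro CollectI allI)
          fix y :: "('m,'n,'r,'s,'c) theta"
          have "l1 * l1norm Us + inner (- GUs) (fst (snd y) - Us) \<le> l1 * l1norm (fst (snd y))" by (rule prox)
          then have "(l1 * l1norm Us + inner (- GUs) (fst (snd y) - Us)) / l1 \<le> l1 * l1norm (fst (snd y)) / l1"
            using pos by (intro divide_right_mono) auto
          then have "l1norm Us + inner (- (1/l1) *\<^sub>R GUs) (fst (snd y) - Us) \<le> l1norm (fst (snd y))"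
            using pos by (simp add: add_divide_distrib diff_divide_distrib)
          then show "l1norm (fst (snd Ths)) + inner (0, - (1/l1) *\<^sub>R GUs, 0, 0, 0, 0, 0, 0) (y - Ths) \<le> l1norm (fst (snd y))"
            unfolding Ths by (simp add: inner_prod_def)
        qed
        have neg: "- grad (Ls_th X H Y l2 r1 r2 d1 d2 mu) Ths = l1 *\<^sub>R (0, - (1/l1) *\<^sub>R GUs, 0, 0, 0, 0, 0, 0)"
          unfolding gr using pos by simp
        have mem: "- grad (Ls_th X H Y l2 r1 r2 d1 d2 mu) Ths \<in> (\<lambda>g. l1 *\<^sub>R g) ` subdiff (\<lambda>T. l1norm (fst (snd T))) Ths"
          by (rule rev_image_eqI[OF sd]) (simp only: neg)
        have cs: "H = Qs ** Us + e1s" "Y = Ws ** Qs ** Us + e2s" using gR1 gR2 by (simp_all add: algebra_simps)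
        show ?thesis unfolding S_def Sset_def
          using tn mem cs unfolding Ths by simp
      qed
      have c1: "\<forall>k. thnorm (Th k) < R" using thb unfolding R_def by (smt (verit))
      have c2: "\<forall>phi Ths. strict_mono phi \<and> (Th \<circ> phi) \<longlonglongrightarrow> Ths \<longrightarrow> Ths \<in> S" using limS by blast
      have c3: "(\<lambda>k. thdist (Th k) S) \<longlonglongrightarrow> 0"
      proof -
        have bdd: "bounded (range Th)"
          unfolding bounded_iff
        proof (intro exI ballI)
          fix x assume "x \<in> range Th"
          then obtain k where x: "x = Th k" by blast
          show "norm x \<le> 8 * (T0 + Rb)" unfolding x using norm_le_8thnorm[of "Th k"] thb[of k] by simp
        qed
        obtain l0 and r0 :: "nat \<Rightarrow> nat" where "strict_mono r0" "(Th \<circ> r0) \<longlonglongrightarrow> l0"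
          using bounded_imp_convergent_subsequence[OF bdd] by blast
        then have Sne: "S \<noteq> {}" using limS by blast
        have tdnn: "thdist (Th k) S \<ge> 0" for k
          unfolding thdist_def by (rule cINF_greatest[OF Sne]) (rule thnorm_nonneg)
        have tdle: "thdist T S \<le> thnorm (x - T)" if "x \<in> S" for T x
          unfolding thdist_def by (rule cINF_lower[OF _ that]) (rule bdd_belowI2[where m=0], rule thnorm_nonneg)
        show ?thesis
        proof (rule ccontr)
          assume nt: "\<not> ?thesis"
          then obtain eps where eps: "eps > 0" and fr: "\<forall>no. \<exists>n\<ge>no. \<not> norm (thdist (Th n) S - 0) < eps"
            unfolding LIMSEQ_iff by blast
          define I where "I = {n. thdist (Th n) S \<ge> eps}"
          have "infinite I" unfolding infinite_nat_iff_unbounded_le I_def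
          proof
            fix m
            obtain n where "n \<ge> m" "\<not> norm (thdist (Th n) S - 0) < eps" using fr by blast
            then show "\<exists>n\<ge>m. n \<in> {n. eps \<le> thdist (Th n) S}" using tdnn[of n] by auto
          qed
          then obtain psi :: "nat \<Rightarrow> nat" where psi: "strict_mono psi" "\<forall>n. psi n \<in> I"
            using infinite_enumerate by blast
          have bdd2: "bounded (range (\<lambda>n. Th (psi n)))" by (rule bounded_subset[OF bdd]) auto
          obtain l and chi :: "nat \<Rightarrow> nat" where chi: "strict_mono chi" "((\<lambda>n. Th (psi n)) \<circ> chi) \<longlonglongrightarrow> l"
            using bounded_imp_convergent_subsequence[OF bdd2] by blast
          define phi where "phi = psi \<circ> chi"
          have smphi: "strict_mono phi" unfolding phi_def using psi(1) chi(1) by (rule strict_mono_o)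
          have limphi: "(Th \<circ> phi) \<longlonglongrightarrow> l" using chi(2) by (simp add: phi_def o_def)
          have lS: "l \<in> S" by (rule limS[OF smphi limphi])
          have "(\<lambda>n. l - (Th \<circ> phi) n) \<longlonglongrightarrow> l - l" by (intro tendsto_intros limphi)
          then have "(\<lambda>n. norm (l - Th (phi n))) \<longlonglongrightarrow> 0" using tendsto_norm by fastforce
          then obtain N where N: "\<forall>n\<ge>N. norm (norm (l - Th (phi n)) - 0) < eps" using eps unfolding LIMSEQ_iff by blast
          have "thdist (Th (phi N)) S \<le> thnorm (l - Th (phi N))" by (rule tdle[OF lS])
          also have "\<dots> \<le> norm (l - Th (phi N))" by (rule thnorm_le_norm)
          also have "\<dots> < eps" using N by simp
          finally have "thdist (Th (phi N)) S < eps" .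
          moreover have "phi N \<in> I" using psi(2) by (simp add: phi_def)
          ultimately show False unfolding I_def by simp
        qed
      qed
      show ?thesis unfolding Let_def using c1 c2 c3 unfolding Th_def S_def by simp
    qed
    done
qed

end
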